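(* Consider two $M^{X}/G/1$ queues operating under the LCFS-p-resume discipline, with the same Poisson batch-arrival rate $\lambda$ and the same batch-size distribution (mean $\mu$), and with generic i.i.d. service times $S$ and $S'$ respectively, both stable ($\lambda\mu ES<1$, $\lambda\mu ES'<1$). Let $M$ and $M'$ be the maximum numbers of customers in the system during a busy period in the respective queues. If $S'\leq_{LT}S$, then $M'\leq_{st}M$. In particular, if $S'\geq_{cx}S$, then $M'\leq_{st}M$.
   Context: Under LCFS-p-resume, the customer who has been in the system the least amount of time is always served, newly arriving customers preempt the customer in service, customers within a batch are labeled arbitrarily (treated as arriving sequentially), service is non-idling, and preempted customers resume service where they left off. Orders: $X\geq_{st}Y$ iff $P(X>t)\geq P(Y>t)$ for all $t$; $X\geq_{cx}Y$ iff $E\phi(X)\geq E\phi(Y)$ for all convex $\phi$ for which the expectations exist; $X\geq_{LT}Y$ iff $E[e^{-\theta X}]\leq E[e^{-\theta Y}]$ for all $\theta>0$ for which the expectations exist. *)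

theory Defs
  imports "HOL-Probability.Probability"
begin

definition st_ge :: "'a::linorder measure \<Rightarrow> 'a measure \<Rightarrow> bool" where
  "st_ge X Y \<longleftrightarrow> (\<forall>t. measure Y {x\<in>space Y. x > t} \<le> measure X {x\<in>space X. x > t})"

definition cx_ge :: "real measure \<Rightarrow> real measure \<Rightarrow> bool" where
  "cx_ge X Y \<longleftrightarrow> (\<forall>\<phi>. convex_on UNIV \<phi> \<longrightarrow> integrable X \<phi> \<longrightarrow> integrable Y \<phi> \<longrightarrow>
      (\<integral>y. \<phi> y \<partial>Y) \<le> (\<integral>x. \<phi> x \<partial>X))"

definition lt_ge :: "real measure \<Rightarrow> real measure \<Rightarrow> bool" where
  "lt_ge X Y \<longleftrightarrow> (\<forall>\<theta>>0. integrable X (\<lambda>x. exp (-\<theta>*x)) \<longrightarrow> integrable Y (\<lambda>y. exp (-\<theta>*y)) \<longrightarrow>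
      (\<integral>x. exp (-\<theta>*x) \<partial>X) \<le> (\<integral>y. exp (-\<theta>*y) \<partial>Y))"

text \<open>The system content is a stack of remaining service requirements (head = customer in
  service). Serving for d time units: the head is worked on; when it completes, the next one
  resumes where it left off (preemptive resume).\<close>
fun serve :: "real \<Rightarrow> real list \<Rightarrow> real list" where
  "serve d [] = []"
| "serve d (x # xs) = (if d < x then (x - d) # xs else serve (d - x) xs)"

text \<open>Inputs: A k = time between the k-th and (k+1)-st batch arrival (batch 0 opens the busy
  period at time 0); N k = size of batch k; V k j = service time of the j-th customer of batch k.
  Customers of a batch arrive sequentially, each preempting its predecessor, so the last one of
  the batch is on top of the stack.\<close>
definition batch :: "(nat \<Rightarrow> nat) \<Rightarrow> (nat \<Rightarrow> nat \<Rightarrow> real) \<Rightarrow> nat \<Rightarrow> real list" where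
  "batch N V k = rev (map (V k) [0..<N k])"

fun stack :: "(nat \<Rightarrow> real) \<Rightarrow> (nat \<Rightarrow> nat) \<Rightarrow> (nat \<Rightarrow> nat \<Rightarrow> real) \<Rightarrow> nat \<Rightarrow> real list" where
  "stack A N V 0 = batch N V 0"
| "stack A N V (Suc k) = batch N V (Suc k) @ serve (A k) (stack A N V k)"

definition in_bp :: "(nat \<Rightarrow> real) \<Rightarrow> (nat \<Rightarrow> nat) \<Rightarrow> (nat \<Rightarrow> nat \<Rightarrow> real) \<Rightarrow> nat \<Rightarrow> bool" where
  "in_bp A N V k \<longleftrightarrow> (\<forall>j<k. serve (A j) (stack A N V j) \<noteq> [])"

text \<open>Maximum number of customers in the system during the busy period (the maximum is
  attained at arrival instants).\<close>
definition max_bp :: "(nat \<Rightarrow> real) \<Rightarrow> (nat \<Rightarrow> nat) \<Rightarrow> (nat \<Rightarrow> nat \<Rightarrow> real) \<Rightarrow> enat" where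
  "max_bp A N V = (SUP k\<in>{k. in_bp A N V k}. enat (length (stack A N V k)))"

definition exp_dist :: "real \<Rightarrow> real measure" where
  "exp_dist l = density lborel (exponential_density l)"

definition input_space :: "real \<Rightarrow> nat pmf \<Rightarrow> real measure
    \<Rightarrow> ((nat \<Rightarrow> real) \<times> (nat \<Rightarrow> nat) \<times> (nat \<Rightarrow> nat \<Rightarrow> real)) measure" where
  "input_space lam Bd Sd =
     PiM UNIV (\<lambda>_::nat. exp_dist lam) \<Otimes>\<^sub>M
       (PiM UNIV (\<lambda>_::nat. measure_pmf Bd) \<Otimes>\<^sub>M PiM UNIV (\<lambda>_::nat. PiM UNIV (\<lambda>_::nat. Sd)))"

definition M_dist :: "real \<Rightarrow> nat pmf \<Rightarrow> real measure \<Rightarrow> enat measure" where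
  "M_dist lam Bd Sd = distr (input_space lam Bd Sd) (count_space UNIV)
      (\<lambda>(A, N, V). max_bp A N V)"

end

theory Submission
  imports Defs
begin


lemma iterP_measure:
  assumes "prob_space M"
  shows "distr (M \<Otimes>\<^sub>M PiM UNIV (\<lambda>_::nat. M)) (PiM UNIV (\<lambda>_::nat. M)) (\<lambda>(s, \<omega>). case_nat s \<omega>) = PiM UNIV (\<lambda>_::nat. M)"
proof -
  interpret sequence_space M by (simp add: sequence_space_def product_prob_space_def product_sigma_finite_def prob_space_imp_sigma_finite assms product_prob_space_axioms_def)
  show ?thesis by (rule PiM_iter)
qed

lemma swap_mid_nn:
  assumes s1: "sigma_finite_measure M1" and s2: "sigma_finite_measure M2"
    and s3: "sigma_finite_measure M3" and s4: "sigma_finite_measure M4"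
    and f[measurable]: "f \<in> borel_measurable ((M1 \<Otimes>\<^sub>M M2) \<Otimes>\<^sub>M (M3 \<Otimes>\<^sub>M M4))"
  shows "(\<integral>\<^sup>+z. f z \<partial>((M1 \<Otimes>\<^sub>M M2) \<Otimes>\<^sub>M (M3 \<Otimes>\<^sub>M M4))) =
    (\<integral>\<^sup>+z. f ((fst (fst z), fst (snd z)), (snd (fst z), snd (snd z))) \<partial>((M1 \<Otimes>\<^sub>M M3) \<Otimes>\<^sub>M (M2 \<Otimes>\<^sub>M M4)))"
proof -
  interpret p12: pair_sigma_finite M1 M2 using s1 s2 by (simp add: pair_sigma_finite_def)
  interpret p34: pair_sigma_finite M3 M4 using s3 s4 by (simp add: pair_sigma_finite_def)
  interpret p13: pair_sigma_finite M1 M3 using s1 s3 by (simp add: pair_sigma_finite_def)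
  interpret p24: pair_sigma_finite M2 M4 using s2 s4 by (simp add: pair_sigma_finite_def)
  interpret p23: pair_sigma_finite M2 M3 using s2 s3 by (simp add: pair_sigma_finite_def)
  have s34: "sigma_finite_measure (M3 \<Otimes>\<^sub>M M4)" by (rule sigma_finite_pair_measure[OF s3 s4])
  have s24: "sigma_finite_measure (M2 \<Otimes>\<^sub>M M4)" by (rule sigma_finite_pair_measure[OF s2 s4])
  have e1: "(\<integral>\<^sup>+z. f z \<partial>((M1 \<Otimes>\<^sub>M M2) \<Otimes>\<^sub>M (M3 \<Otimes>\<^sub>M M4))) =
     (\<integral>\<^sup>+x12. \<integral>\<^sup>+x34. f (x12,x34) \<partial>(M3 \<Otimes>\<^sub>M M4) \<partial>(M1 \<Otimes>\<^sub>M M2))"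
    by (rule sigma_finite_measure.nn_integral_fst[OF s34, symmetric]) simp
  also have "\<dots> = (\<integral>\<^sup>+x1. \<integral>\<^sup>+x2. \<integral>\<^sup>+x34. f ((x1,x2),x34) \<partial>(M3 \<Otimes>\<^sub>M M4) \<partial>M2 \<partial>M1)"
    by (rule sigma_finite_measure.nn_integral_fst[OF s2, symmetric, where f="\<lambda>x12. \<integral>\<^sup>+x34. f (x12,x34) \<partial>(M3 \<Otimes>\<^sub>M M4)"]) measurable
  also have "\<dots> = (\<integral>\<^sup>+x1. \<integral>\<^sup>+x2. \<integral>\<^sup>+x3. \<integral>\<^sup>+x4. f ((x1,x2),(x3,x4)) \<partial>M4 \<partial>M3 \<partial>M2 \<partial>M1)"
    apply (intro nn_integral_cong)
    apply (rule sigma_finite_measure.nn_integral_fst[OF s4, symmetric, where f="\<lambda>x34. f ((_,_),x34)"])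
    apply (auto simp: space_pair_measure)
    done
  also have "\<dots> = (\<integral>\<^sup>+x1. \<integral>\<^sup>+x3. \<integral>\<^sup>+x2. \<integral>\<^sup>+x4. f ((x1,x2),(x3,x4)) \<partial>M4 \<partial>M2 \<partial>M3 \<partial>M1)"
    apply (rule nn_integral_cong)
    apply (rule p23.Fubini'[symmetric])
    apply measurable
    done
  also have "\<dots> = (\<integral>\<^sup>+x1. \<integral>\<^sup>+x3. \<integral>\<^sup>+x24. f ((x1,fst x24),(x3,snd x24)) \<partial>(M2 \<Otimes>\<^sub>M M4) \<partial>M3 \<partial>M1)"
    apply (intro nn_integral_cong)
    subgoal for x1 x3
    proof -
      assume "x1 \<in> space M1" "x3 \<in> space M3"
      then have "(\<lambda>x24. f ((x1,fst x24),(x3,snd x24))) \<in> borel_measurable (M2 \<Otimes>\<^sub>M M4)" by measurable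
      from sigma_finite_measure.nn_integral_fst[OF s4 this] show ?thesis by simp
    qed
    done
  also have "\<dots> = (\<integral>\<^sup>+x13. \<integral>\<^sup>+x24. f ((fst x13,fst x24),(snd x13,snd x24)) \<partial>(M2 \<Otimes>\<^sub>M M4) \<partial>(M1 \<Otimes>\<^sub>M M3))"
  proof -
    have "(\<lambda>x13. \<integral>\<^sup>+x24. f ((fst x13,fst x24),(snd x13,snd x24)) \<partial>(M2 \<Otimes>\<^sub>M M4)) \<in> borel_measurable (M1 \<Otimes>\<^sub>M M3)"
      by measurable
    from sigma_finite_measure.nn_integral_fst[OF s3 this] show ?thesis by simp
  qed
  also have "\<dots> = (\<integral>\<^sup>+z. f ((fst (fst z), fst (snd z)), (snd (fst z), snd (snd z))) \<partial>((M1 \<Otimes>\<^sub>M M3) \<Otimes>\<^sub>M (M2 \<Otimes>\<^sub>M M4)))"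
  proof -
    have "(\<lambda>z. f ((fst (fst z), fst (snd z)), (snd (fst z), snd (snd z)))) \<in> borel_measurable ((M1 \<Otimes>\<^sub>M M3) \<Otimes>\<^sub>M (M2 \<Otimes>\<^sub>M M4))"
      by measurable
    from sigma_finite_measure.nn_integral_fst[OF s24 this] show ?thesis by simp
  qed
  finally show ?thesis .
qed

definition consw :: "real \<times> nat \<times> (nat \<Rightarrow> real) \<Rightarrow> (nat \<Rightarrow> real) \<times> (nat \<Rightarrow> nat) \<times> (nat \<Rightarrow> nat \<Rightarrow> real)
   \<Rightarrow> (nat \<Rightarrow> real) \<times> (nat \<Rightarrow> nat) \<times> (nat \<Rightarrow> nat \<Rightarrow> real)" where
  "consw r w = (case_nat (fst r) (fst w), case_nat (fst (snd r)) (fst (snd w)), case_nat (snd (snd r)) (snd (snd w)))"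

definition Rm :: "real \<Rightarrow> nat pmf \<Rightarrow> real measure \<Rightarrow> (real \<times> nat \<times> (nat \<Rightarrow> real)) measure" where
  "Rm lam Bd Sd = exp_dist lam \<Otimes>\<^sub>M (measure_pmf Bd \<Otimes>\<^sub>M PiM UNIV (\<lambda>_::nat. Sd))"

lemma prob_exp_dist: "lam > 0 \<Longrightarrow> prob_space (exp_dist lam)"
  unfolding exp_dist_def by (rule prob_space_exponential_density)

lemma sets_exp_dist[measurable_cong]: "sets (exp_dist lam) = sets borel"
  unfolding exp_dist_def by simp

lemma sets_input_space[measurable_cong]:
  "sets (input_space lam Bd Sd) = sets (PiM UNIV (\<lambda>_::nat. borel) \<Otimes>\<^sub>M (PiM UNIV (\<lambda>_::nat. count_space UNIV) \<Otimes>\<^sub>M PiM UNIV (\<lambda>_::nat. PiM UNIV (\<lambda>_::nat. Sd))))"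
  unfolding input_space_def
  by (intro sets_pair_measure_cong sets_PiM_cong refl) (simp_all add: sets_exp_dist)

lemma sets_Rm[measurable_cong]:
  "sets (Rm lam Bd Sd) = sets (borel \<Otimes>\<^sub>M (count_space UNIV \<Otimes>\<^sub>M PiM UNIV (\<lambda>_::nat. Sd)))"
  unfolding Rm_def
  by (intro sets_pair_measure_cong sets_PiM_cong refl) (simp_all add: sets_exp_dist)

lemma prob_PiM: "prob_space M \<Longrightarrow> prob_space (PiM UNIV (\<lambda>_::nat. M))"
  by (simp add: prob_space_PiM)

lemma sf_prob: "prob_space M \<Longrightarrow> sigma_finite_measure M"
  by (simp add: prob_space_imp_sigma_finite)

lemma prob_input: assumes "lam > 0" "prob_space Sd" shows "prob_space (input_space lam Bd Sd)"
  unfolding input_space_def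
  by (intro prob_space_pair prob_PiM prob_exp_dist assms prob_space_measure_pmf)

lemma prob_Rm: assumes "lam > 0" "prob_space Sd" shows "prob_space (Rm lam Bd Sd)"
  unfolding Rm_def
  by (intro prob_space_pair prob_PiM prob_exp_dist assms prob_space_measure_pmf)

lemma measurable_consw[measurable]:
  "(\<lambda>(r, w). consw r w) \<in> measurable (Rm lam Bd Sd \<Otimes>\<^sub>M input_space lam Bd Sd) (input_space lam Bd Sd)"
  unfolding consw_def Rm_def input_space_def by measurable

lemma decomp:
  assumes lam: "lam > 0" and S: "prob_space Sd"
    and f: "f \<in> borel_measurable (input_space lam Bd Sd)"
  shows "(\<integral>\<^sup>+w. f w \<partial>input_space lam Bd Sd) =
     (\<integral>\<^sup>+r. \<integral>\<^sup>+w. f (consw r w) \<partial>input_space lam Bd Sd \<partial>Rm lam Bd Sd)"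
proof -
  let ?EA = "exp_dist lam"
  let ?B = "measure_pmf Bd"
  let ?PS = "PiM UNIV (\<lambda>_::nat. Sd)"
  let ?PA = "PiM UNIV (\<lambda>_::nat. ?EA)"
  let ?PN = "PiM UNIV (\<lambda>_::nat. ?B)"
  let ?PV = "PiM UNIV (\<lambda>_::nat. ?PS)"
  have pEA: "prob_space ?EA" by (rule prob_exp_dist[OF lam])
  have pB: "prob_space ?B" by (rule prob_space_measure_pmf)
  have pPS: "prob_space ?PS" by (rule prob_PiM[OF S])
  have pPA: "prob_space ?PA" by (rule prob_PiM[OF pEA])
  have pPN: "prob_space ?PN" by (rule prob_PiM[OF pB])
  have pPV: "prob_space ?PV" by (rule prob_PiM[OF pPS])
  note sf = sf_prob[OF pEA] sf_prob[OF pB] sf_prob[OF pPS] sf_prob[OF pPA] sf_prob[OF pPN] sf_prob[OF pPV]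
  have Om: "input_space lam Bd Sd = ?PA \<Otimes>\<^sub>M (?PN \<Otimes>\<^sub>M ?PV)"
    unfolding input_space_def ..
  have R: "Rm lam Bd Sd = ?EA \<Otimes>\<^sub>M (?B \<Otimes>\<^sub>M ?PS)"
    unfolding Rm_def ..
  have iA: "distr (?EA \<Otimes>\<^sub>M ?PA) ?PA (\<lambda>(s, \<omega>). case_nat s \<omega>) = ?PA"
    by (rule iterP_measure[OF pEA])
  have iN: "distr (?B \<Otimes>\<^sub>M ?PN) ?PN (\<lambda>(s, \<omega>). case_nat s \<omega>) = ?PN"
    by (rule iterP_measure[OF pB])
  have iV: "distr (?PS \<Otimes>\<^sub>M ?PV) ?PV (\<lambda>(s, \<omega>). case_nat s \<omega>) = ?PV"
    by (rule iterP_measure[OF pPS])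
  have NV: "?PN \<Otimes>\<^sub>M ?PV = distr ((?B \<Otimes>\<^sub>M ?PN) \<Otimes>\<^sub>M (?PS \<Otimes>\<^sub>M ?PV)) (?PN \<Otimes>\<^sub>M ?PV)
      (\<lambda>(x, y). ((\<lambda>(s, \<omega>). case_nat s \<omega>) x, (\<lambda>(s, \<omega>). case_nat s \<omega>) y))"
  proof -
    have "distr (?B \<Otimes>\<^sub>M ?PN) ?PN (\<lambda>(s, \<omega>). case_nat s \<omega>) \<Otimes>\<^sub>M distr (?PS \<Otimes>\<^sub>M ?PV) ?PV (\<lambda>(s, \<omega>). case_nat s \<omega>)
      = distr ((?B \<Otimes>\<^sub>M ?PN) \<Otimes>\<^sub>M (?PS \<Otimes>\<^sub>M ?PV)) (?PN \<Otimes>\<^sub>M ?PV)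
      (\<lambda>(x, y). ((\<lambda>(s, \<omega>). case_nat s \<omega>) x, (\<lambda>(s, \<omega>). case_nat s \<omega>) y))"
      apply (rule pair_measure_distr)
      apply measurable
      apply (simp only: iV sf)
      done
    then show ?thesis by (simp only: iN iV)
  qed
  have Omd: "?PA \<Otimes>\<^sub>M (?PN \<Otimes>\<^sub>M ?PV) = distr ((?EA \<Otimes>\<^sub>M ?PA) \<Otimes>\<^sub>M ((?B \<Otimes>\<^sub>M ?PN) \<Otimes>\<^sub>M (?PS \<Otimes>\<^sub>M ?PV))) (?PA \<Otimes>\<^sub>M (?PN \<Otimes>\<^sub>M ?PV))
      (\<lambda>(x, y). ((\<lambda>(s, \<omega>). case_nat s \<omega>) x, (\<lambda>(x, y). ((\<lambda>(s, \<omega>). case_nat s \<omega>) x, (\<lambda>(s, \<omega>). case_nat s \<omega>) y)) y))"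
  proof -
    have "distr (?EA \<Otimes>\<^sub>M ?PA) ?PA (\<lambda>(s, \<omega>). case_nat s \<omega>) \<Otimes>\<^sub>M distr ((?B \<Otimes>\<^sub>M ?PN) \<Otimes>\<^sub>M (?PS \<Otimes>\<^sub>M ?PV)) (?PN \<Otimes>\<^sub>M ?PV)
      (\<lambda>(x, y). ((\<lambda>(s, \<omega>). case_nat s \<omega>) x, (\<lambda>(s, \<omega>). case_nat s \<omega>) y))
      = distr ((?EA \<Otimes>\<^sub>M ?PA) \<Otimes>\<^sub>M ((?B \<Otimes>\<^sub>M ?PN) \<Otimes>\<^sub>M (?PS \<Otimes>\<^sub>M ?PV))) (?PA \<Otimes>\<^sub>M (?PN \<Otimes>\<^sub>M ?PV))
      (\<lambda>(x, y). ((\<lambda>(s, \<omega>). case_nat s \<omega>) x, (\<lambda>(x, y). ((\<lambda>(s, \<omega>). case_nat s \<omega>) x, (\<lambda>(s, \<omega>). case_nat s \<omega>) y)) y))"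
      apply (rule pair_measure_distr)
      apply measurable
      apply (simp only: NV[symmetric])
      apply (rule sigma_finite_pair_measure; simp add: sf)
      done
    then show ?thesis by (simp only: iA NV[symmetric])
  qed
  have sfNV: "sigma_finite_measure ((?B \<Otimes>\<^sub>M ?PN) \<Otimes>\<^sub>M (?PS \<Otimes>\<^sub>M ?PV))"
    by (intro sigma_finite_pair_measure sf)
  have sfNV2: "sigma_finite_measure ((?B \<Otimes>\<^sub>M ?PS) \<Otimes>\<^sub>M (?PN \<Otimes>\<^sub>M ?PV))"
    by (intro sigma_finite_pair_measure sf)
  have sfO: "sigma_finite_measure (?PA \<Otimes>\<^sub>M (?PN \<Otimes>\<^sub>M ?PV))"
    by (intro sigma_finite_pair_measure sf)
  have fm[measurable]: "f \<in> borel_measurable (?PA \<Otimes>\<^sub>M (?PN \<Otimes>\<^sub>M ?PV))" using f Om by simp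
  have "(\<integral>\<^sup>+w. f w \<partial>input_space lam Bd Sd) = (\<integral>\<^sup>+w. f w \<partial>(?PA \<Otimes>\<^sub>M (?PN \<Otimes>\<^sub>M ?PV)))" using Om by simp
  also have "\<dots> = (\<integral>\<^sup>+z. f ((\<lambda>(x, y). ((\<lambda>(s, \<omega>). case_nat s \<omega>) x, (\<lambda>(x, y). ((\<lambda>(s, \<omega>). case_nat s \<omega>) x, (\<lambda>(s, \<omega>). case_nat s \<omega>) y)) y)) z)
      \<partial>((?EA \<Otimes>\<^sub>M ?PA) \<Otimes>\<^sub>M ((?B \<Otimes>\<^sub>M ?PN) \<Otimes>\<^sub>M (?PS \<Otimes>\<^sub>M ?PV))))"
  proof -
    have "(\<integral>\<^sup>+w. f w \<partial>distr ((?EA \<Otimes>\<^sub>M ?PA) \<Otimes>\<^sub>M ((?B \<Otimes>\<^sub>M ?PN) \<Otimes>\<^sub>M (?PS \<Otimes>\<^sub>M ?PV))) (?PA \<Otimes>\<^sub>M (?PN \<Otimes>\<^sub>M ?PV))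
      (\<lambda>(x, y). ((\<lambda>(s, \<omega>). case_nat s \<omega>) x, (\<lambda>(x, y). ((\<lambda>(s, \<omega>). case_nat s \<omega>) x, (\<lambda>(s, \<omega>). case_nat s \<omega>) y)) y))) = 
      (\<integral>\<^sup>+z. f ((\<lambda>(x, y). ((\<lambda>(s, \<omega>). case_nat s \<omega>) x, (\<lambda>(x, y). ((\<lambda>(s, \<omega>). case_nat s \<omega>) x, (\<lambda>(s, \<omega>). case_nat s \<omega>) y)) y)) z)
      \<partial>((?EA \<Otimes>\<^sub>M ?PA) \<Otimes>\<^sub>M ((?B \<Otimes>\<^sub>M ?PN) \<Otimes>\<^sub>M (?PS \<Otimes>\<^sub>M ?PV))))"
      by (rule nn_integral_distr) measurable
    then show ?thesis unfolding Omd[symmetric] .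
  qed
  also have "\<dots> = (\<integral>\<^sup>+x. \<integral>\<^sup>+y. f (case_nat (fst x) (snd x), case_nat (fst (fst y)) (snd (fst y)), case_nat (fst (snd y)) (snd (snd y)))
      \<partial>((?B \<Otimes>\<^sub>M ?PN) \<Otimes>\<^sub>M (?PS \<Otimes>\<^sub>M ?PV)) \<partial>(?EA \<Otimes>\<^sub>M ?PA))"
  proof -
    have "(\<lambda>z. f (case_nat (fst (fst z)) (snd (fst z)), case_nat (fst (fst (snd z))) (snd (fst (snd z))), case_nat (fst (snd (snd z))) (snd (snd (snd z)))))
       \<in> borel_measurable ((?EA \<Otimes>\<^sub>M ?PA) \<Otimes>\<^sub>M ((?B \<Otimes>\<^sub>M ?PN) \<Otimes>\<^sub>M (?PS \<Otimes>\<^sub>M ?PV)))" by measurable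
    from sigma_finite_measure.nn_integral_fst[OF sfNV this] show ?thesis by (simp add: case_prod_beta)
  qed
  also have "\<dots> = (\<integral>\<^sup>+x. \<integral>\<^sup>+y. f (case_nat (fst x) (snd x), case_nat (fst (fst y)) (fst (snd y)), case_nat (snd (fst y)) (snd (snd y)))
      \<partial>((?B \<Otimes>\<^sub>M ?PS) \<Otimes>\<^sub>M (?PN \<Otimes>\<^sub>M ?PV)) \<partial>(?EA \<Otimes>\<^sub>M ?PA))"
  proof (rule nn_integral_cong)
    fix x assume x: "x \<in> space (?EA \<Otimes>\<^sub>M ?PA)"
    have "(\<lambda>y. f (case_nat (fst x) (snd x), case_nat (fst (fst y)) (snd (fst y)), case_nat (fst (snd y)) (snd (snd y))))
      \<in> borel_measurable ((?B \<Otimes>\<^sub>M ?PN) \<Otimes>\<^sub>M (?PS \<Otimes>\<^sub>M ?PV))" using x by measurable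
    from swap_mid_nn[OF sf(2,5,3,6) this] show "(\<integral>\<^sup>+y. f (case_nat (fst x) (snd x), case_nat (fst (fst y)) (snd (fst y)), case_nat (fst (snd y)) (snd (snd y)))
      \<partial>((?B \<Otimes>\<^sub>M ?PN) \<Otimes>\<^sub>M (?PS \<Otimes>\<^sub>M ?PV))) = (\<integral>\<^sup>+y. f (case_nat (fst x) (snd x), case_nat (fst (fst y)) (fst (snd y)), case_nat (snd (fst y)) (snd (snd y)))
      \<partial>((?B \<Otimes>\<^sub>M ?PS) \<Otimes>\<^sub>M (?PN \<Otimes>\<^sub>M ?PV)))" by simp
  qed
  also have "\<dots> = (\<integral>\<^sup>+z. f (case_nat (fst (fst z)) (snd (fst z)), case_nat (fst (fst (snd z))) (fst (snd (snd z))), case_nat (snd (fst (snd z))) (snd (snd (snd z))))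
      \<partial>((?EA \<Otimes>\<^sub>M ?PA) \<Otimes>\<^sub>M ((?B \<Otimes>\<^sub>M ?PS) \<Otimes>\<^sub>M (?PN \<Otimes>\<^sub>M ?PV))))"
  proof -
    have "(\<lambda>z. f (case_nat (fst (fst z)) (snd (fst z)), case_nat (fst (fst (snd z))) (fst (snd (snd z))), case_nat (snd (fst (snd z))) (snd (snd (snd z)))))
      \<in> borel_measurable ((?EA \<Otimes>\<^sub>M ?PA) \<Otimes>\<^sub>M ((?B \<Otimes>\<^sub>M ?PS) \<Otimes>\<^sub>M (?PN \<Otimes>\<^sub>M ?PV)))" by measurable
    from sigma_finite_measure.nn_integral_fst[OF sfNV2 this] show ?thesis by simp
  qed
  also have "\<dots> = (\<integral>\<^sup>+z. f (case_nat (fst (fst z)) (fst (snd z)), case_nat (fst (snd (fst z))) (fst (snd (snd z))), case_nat (snd (snd (fst z))) (snd (snd (snd z))))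
      \<partial>((?EA \<Otimes>\<^sub>M (?B \<Otimes>\<^sub>M ?PS)) \<Otimes>\<^sub>M (?PA \<Otimes>\<^sub>M (?PN \<Otimes>\<^sub>M ?PV))))"
  proof -
    have "(\<lambda>z. f (case_nat (fst (fst z)) (snd (fst z)), case_nat (fst (fst (snd z))) (fst (snd (snd z))), case_nat (snd (fst (snd z))) (snd (snd (snd z)))))
      \<in> borel_measurable ((?EA \<Otimes>\<^sub>M ?PA) \<Otimes>\<^sub>M ((?B \<Otimes>\<^sub>M ?PS) \<Otimes>\<^sub>M (?PN \<Otimes>\<^sub>M ?PV)))" by measurable
    from swap_mid_nn[OF sf(1,4) sigma_finite_pair_measure[OF sf(2,3)] sigma_finite_pair_measure[OF sf(5,6)] this]
    show ?thesis by simp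
  qed
  also have "\<dots> = (\<integral>\<^sup>+r. \<integral>\<^sup>+w. f (consw r w) \<partial>(?PA \<Otimes>\<^sub>M (?PN \<Otimes>\<^sub>M ?PV)) \<partial>(?EA \<Otimes>\<^sub>M (?B \<Otimes>\<^sub>M ?PS)))"
  proof -
    have "(\<lambda>z. f (case_nat (fst (fst z)) (fst (snd z)), case_nat (fst (snd (fst z))) (fst (snd (snd z))), case_nat (snd (snd (fst z))) (snd (snd (snd z)))))
      \<in> borel_measurable ((?EA \<Otimes>\<^sub>M (?B \<Otimes>\<^sub>M ?PS)) \<Otimes>\<^sub>M (?PA \<Otimes>\<^sub>M (?PN \<Otimes>\<^sub>M ?PV)))" by measurable
    from sigma_finite_measure.nn_integral_fst[OF sfO this] show ?thesis by (simp add: consw_def)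
  qed
  finally show ?thesis using Om R by simp
qed


definition mlf :: "'a measure \<Rightarrow> ('a \<Rightarrow> real list) \<Rightarrow> bool" where
  "mlf M g \<longleftrightarrow> (\<lambda>x. length (g x)) \<in> measurable M (count_space UNIV) \<and> (\<forall>i. (\<lambda>x. g x ! i) \<in> borel_measurable M)"

lemma mlf_const: "mlf M (\<lambda>_. xs)"
  unfolding mlf_def by simp

lemma mlf_Cons:
  assumes "f \<in> borel_measurable M" "mlf M g"
  shows "mlf M (\<lambda>x. f x # g x)"
  unfolding mlf_def
proof safe
  have "(\<lambda>x. length (g x)) \<in> measurable M (count_space UNIV)" using assms unfolding mlf_def by simp
  then show "(\<lambda>x. length (f x # g x)) \<in> measurable M (count_space UNIV)" by simp
next
  fix i show "(\<lambda>x. (f x # g x) ! i) \<in> borel_measurable M"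
    using assms unfolding mlf_def by (cases i) auto
qed

lemma mlf_If:
  assumes "Measurable.pred M P" "mlf M g1" "mlf M g2"
  shows "mlf M (\<lambda>x. if P x then g1 x else g2 x)"
proof -
  have e1: "(\<lambda>x. length (if P x then g1 x else g2 x)) = (\<lambda>x. if P x then length (g1 x) else length (g2 x))"
    by auto
  have e2: "\<And>i. (\<lambda>x. (if P x then g1 x else g2 x) ! i) = (\<lambda>x. if P x then g1 x ! i else g2 x ! i)"
    by auto
  show ?thesis using assms unfolding mlf_def e1 e2
    by (auto intro!: measurable_If)
qed

lemma mlf_countable:
  fixes h :: "'a \<Rightarrow> 'i::countable"
  assumes "\<And>L. mlf M (F L)" "h \<in> measurable M (count_space UNIV)"
  shows "mlf M (\<lambda>x. F (h x) x)"
  unfolding mlf_def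
proof safe
  show "(\<lambda>x. length (F (h x) x)) \<in> measurable M (count_space UNIV)"
    by (rule measurable_compose_countable[where f="\<lambda>L x. length (F L x)"]) (use assms in \<open>auto simp: mlf_def\<close>)
  fix i show "(\<lambda>x. F (h x) x ! i) \<in> borel_measurable M"
    by (rule measurable_compose_countable[where f="\<lambda>L x. F L x ! i"]) (use assms in \<open>auto simp: mlf_def\<close>)
qed

lemma mlf_map_upt:
  assumes "\<And>i. f i \<in> borel_measurable M"
  shows "mlf M (\<lambda>x. map (\<lambda>i. f i x) [0..<L])"
  using assms
proof (induction L arbitrary: f)
  case 0 then show ?case by (simp add: mlf_const)
next
  case (Suc L)
  have "mlf M (\<lambda>x. f 0 x # map (\<lambda>i. f (Suc i) x) [0..<L])"
    by (intro mlf_Cons Suc.prems Suc.IH)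
  moreover have "\<And>x. map (\<lambda>i. f i x) [0..<Suc L] = f 0 x # map (\<lambda>i. f (Suc i) x) [0..<L]"
    by (simp add: map_upt_Suc del: upt_Suc)
  ultimately show ?case by simp
qed

lemma mlf_nth: "mlf M g \<Longrightarrow> (\<lambda>x. g x ! i) \<in> borel_measurable M"
  unfolding mlf_def by simp

lemma mlf_length: "mlf M g \<Longrightarrow> (\<lambda>x. length (g x)) \<in> measurable M (count_space UNIV)"
  unfolding mlf_def by simp

lemma mlf_expand: "mlf M g \<Longrightarrow> (\<And>L. mlf M (\<lambda>x. F L (map (\<lambda>i. g x ! i) [0..<L]) x)) \<Longrightarrow> mlf M (\<lambda>x. F (length (g x)) (g x) x)"
proof -
  assume g: "mlf M g" and F: "\<And>L. mlf M (\<lambda>x. F L (map (\<lambda>i. g x ! i) [0..<L]) x)"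
  have "mlf M (\<lambda>x. (\<lambda>L x. F L (map (\<lambda>i. g x ! i) [0..<L]) x) (length (g x)) x)"
    by (rule mlf_countable[OF F mlf_length[OF g]])
  then show ?thesis by (simp add: map_nth)
qed

lemma mlf_append:
  assumes g1: "mlf M g1" and g2: "mlf M g2"
  shows "mlf M (\<lambda>x. g1 x @ g2 x)"
proof -
  have "mlf M (\<lambda>x. (\<lambda>LL x. map (\<lambda>i. if i < fst LL then g1 x ! i else g2 x ! (i - fst LL)) [0..<fst LL + snd LL]) (length (g1 x), length (g2 x)) x)"
    apply (rule mlf_countable[where F="\<lambda>LL x. map (\<lambda>i. if i < fst LL then g1 x ! i else g2 x ! (i - fst LL)) [0..<fst LL + snd LL]" and h="\<lambda>x. (length (g1 x), length (g2 x))"])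
     apply (rule mlf_map_upt)
    using mlf_nth[OF g1] mlf_nth[OF g2] apply (auto intro!: measurable_If)[1]
    using mlf_length[OF g1] mlf_length[OF g2] apply measurable
    done
  moreover have "\<And>x. (\<lambda>LL x. map (\<lambda>i. if i < fst LL then g1 x ! i else g2 x ! (i - fst LL)) [0..<fst LL + snd LL]) (length (g1 x), length (g2 x)) x = g1 x @ g2 x"
    by (auto intro!: nth_equalityI simp: nth_append)
  ultimately show ?thesis by simp
qed

lemma mlf_serve_fixed:
  assumes "\<And>i. f i \<in> borel_measurable M" "d \<in> borel_measurable M"
  shows "mlf M (\<lambda>x. serve (d x) (map (\<lambda>i. f i x) [0..<L]))"
  using assms
proof (induction L arbitrary: f d)
  case 0 then show ?case by (simp add: mlf_const)
next
  case (Suc L)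
  have "mlf M (\<lambda>x. if d x < f 0 x then (f 0 x - d x) # map (\<lambda>i. f (Suc i) x) [0..<L] else serve (d x - f 0 x) (map (\<lambda>i. f (Suc i) x) [0..<L]))"
    apply (rule mlf_If)
    using Suc.prems apply measurable
    apply (rule mlf_Cons)
    using Suc.prems apply measurable
    apply (rule mlf_map_upt) using Suc.prems apply simp
    apply (rule Suc.IH) using Suc.prems apply measurable
    done
  moreover have "\<And>x. map (\<lambda>i. f i x) [0..<Suc L] = f 0 x # map (\<lambda>i. f (Suc i) x) [0..<L]"
    by (simp add: map_upt_Suc del: upt_Suc)
  ultimately show ?case by simp
qed

lemma mlf_serve:
  assumes d: "d \<in> borel_measurable M" and g: "mlf M g"
  shows "mlf M (\<lambda>x. serve (d x) (g x))"
  using mlf_expand[OF g, where F="\<lambda>L ys x. serve (d x) ys"] mlf_serve_fixed[OF mlf_nth[OF g] d]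
  by (simp add: map_nth)

lemma rev_map_upt: "rev (map f [0..<n]) = map (\<lambda>i. f (n - 1 - i)) [0..<n]"
  by (rule nth_equalityI) (auto simp: rev_nth)

lemma mlf_batch:
  assumes N: "N \<in> measurable M (count_space UNIV)" and V: "\<And>j. (\<lambda>x. V x j) \<in> borel_measurable M"
  shows "mlf M (\<lambda>x. rev (map (V x) [0..<N x]))"
proof -
  have "mlf M (\<lambda>x. (\<lambda>L x. map (\<lambda>i. V x (L - 1 - i)) [0..<L]) (N x) x)"
    by (rule mlf_countable[OF mlf_map_upt[OF V] N])
  then show ?thesis by (simp add: rev_map_upt)
qed

lemma mlf_pred_length:
  "mlf M g \<Longrightarrow> Measurable.pred M (\<lambda>x. P (length (g x)))"
proof -
  assume "mlf M g"
  then have "(\<lambda>x. length (g x)) \<in> measurable M (count_space UNIV)" by (rule mlf_length)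
  then show ?thesis by (rule measurable_compose[where g=P]) simp
qed


type_synonym inp = "(nat \<Rightarrow> real) \<times> (nat \<Rightarrow> nat) \<times> (nat \<Rightarrow> nat \<Rightarrow> real)"

definition bt :: "nat \<Rightarrow> (nat \<Rightarrow> real) \<Rightarrow> real list" where
  "bt n v = rev (map v [0..<n])"

fun gs :: "real list \<Rightarrow> inp \<Rightarrow> nat \<Rightarrow> real list" where
  "gs xs w 0 = bt (fst (snd w) 0) (snd (snd w) 0) @ xs"
| "gs xs w (Suc k) = bt (fst (snd w) (Suc k)) (snd (snd w) (Suc k)) @ serve (fst w k) (gs xs w k)"

definition nxt :: "real list \<Rightarrow> real \<times> nat \<times> (nat \<Rightarrow> real) \<Rightarrow> real list" where
  "nxt xs r = serve (fst r) (bt (fst (snd r)) (snd (snd r)) @ xs)"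

definition NRn :: "nat \<Rightarrow> nat \<Rightarrow> real list \<Rightarrow> inp set" where
  "NRn m k xs = {w. \<forall>j\<le>k. (\<forall>i<j. serve (fst w i) (gs xs w i) \<noteq> []) \<longrightarrow> length (gs xs w j) < m}"

definition Alv :: "nat \<Rightarrow> nat \<Rightarrow> real list \<Rightarrow> inp set" where
  "Alv m k xs = {w. \<forall>j<k. length (gs xs w j) < m \<and> serve (fst w j) (gs xs w j) \<noteq> []}"

definition NRall :: "nat \<Rightarrow> real list \<Rightarrow> inp set" where
  "NRall m xs = {w. \<forall>j. (\<forall>i<j. serve (fst w i) (gs xs w i) \<noteq> []) \<longrightarrow> length (gs xs w j) < m}"

lemma batch_bt: "batch N V k = bt (N k) (V k)"
  by (simp add: batch_def bt_def)

lemma stack_gs: "stack A N V k = gs [] (A, N, V) k"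
  by (induction k) (simp_all add: batch_bt)

lemma consw_sel[simp]: "fst (consw r w) = case_nat (fst r) (fst w)"
  "fst (snd (consw r w)) = case_nat (fst (snd r)) (fst (snd w))"
  "snd (snd (consw r w)) = case_nat (snd (snd r)) (snd (snd w))"
  by (simp_all add: consw_def)

lemma gs_consw_0: "gs xs (consw r w) 0 = bt (fst (snd r)) (snd (snd r)) @ xs"
  by (simp add: consw_def)

lemma gs_consw_Suc: "gs xs (consw r w) (Suc k) = gs (nxt xs r) w k"
  by (induction k) (simp_all add: consw_def nxt_def)

lemma fst_consw_Suc: "fst (consw r w) (Suc i) = fst w i" and fst_consw_0: "fst (consw r w) 0 = fst r"
  by (simp_all add: consw_def)

lemma all_le_Suc: "(\<forall>j\<le>Suc k. P j) \<longleftrightarrow> P 0 \<and> (\<forall>j\<le>k. P (Suc j))"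
  by (metis Suc_le_mono le0 not0_implies_Suc)

lemma all_less_Suc': "(\<forall>j<Suc k. P j) \<longleftrightarrow> P 0 \<and> (\<forall>j<k. P (Suc j))"
  by (metis Suc_less_eq not0_implies_Suc zero_less_Suc)

lemma NRn_0: "consw r w \<in> NRn m 0 xs \<longleftrightarrow> length (bt (fst (snd r)) (snd (snd r)) @ xs) < m"
  by (simp add: NRn_def gs_consw_0)

lemma NRn_Suc: "consw r w \<in> NRn m (Suc k) xs \<longleftrightarrow>
   length (bt (fst (snd r)) (snd (snd r)) @ xs) < m \<and> (nxt xs r = [] \<or> w \<in> NRn m k (nxt xs r))"
  unfolding NRn_def mem_Collect_eq all_le_Suc all_less_Suc'
  by (auto simp: gs_consw_0 gs_consw_Suc nxt_def[symmetric] simp del: gs.simps)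

lemma Alv_0: "w \<in> Alv m 0 xs"
  by (simp add: Alv_def)

lemma Alv_Suc: "consw r w \<in> Alv m (Suc k) xs \<longleftrightarrow>
   length (bt (fst (snd r)) (snd (snd r)) @ xs) < m \<and> nxt xs r \<noteq> [] \<and> w \<in> Alv m k (nxt xs r)"
  unfolding Alv_def mem_Collect_eq all_less_Suc'
  by (auto simp: gs_consw_0 gs_consw_Suc nxt_def[symmetric] simp del: gs.simps)

lemma NRall_eq: "NRall m xs = (\<Inter>k. NRn m k xs)"
  unfolding NRall_def NRn_def by auto

lemma NRn_mono: "k \<le> k' \<Longrightarrow> NRn m k' xs \<subseteq> NRn m k xs"
  unfolding NRn_def by auto

lemma Alv_mono: "k \<le> k' \<Longrightarrow> Alv m k' xs \<subseteq> Alv m k xs"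
  unfolding Alv_def by auto

context fixes Sd :: "real measure" assumes Sb: "sets Sd = sets borel"
begin

lemma space_input: "space (input_space lam Bd Sd) = UNIV"
proof -
  have "space Sd = UNIV" using sets_eq_imp_space_eq[OF Sb] by simp
  then show ?thesis unfolding input_space_def
    by (simp add: space_pair_measure space_PiM exp_dist_def PiE_def extensional_def)
qed

lemma meas_A[measurable]: "(\<lambda>w. fst w k) \<in> borel_measurable (input_space lam Bd Sd)"
proof -
  have e: "measurable (PiM UNIV (\<lambda>_::nat. exp_dist lam)) (exp_dist lam) = measurable (PiM UNIV (\<lambda>_::nat. exp_dist lam)) borel"
    by (rule measurable_cong_sets) (simp_all add: sets_exp_dist)
  have "(\<lambda>x. x k) \<in> measurable (PiM UNIV (\<lambda>_::nat. exp_dist lam)) (exp_dist lam)"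
    by (rule measurable_component_singleton) simp
  then have "(\<lambda>x. x k) \<in> borel_measurable (PiM UNIV (\<lambda>_::nat. exp_dist lam))" using e by simp
  then show ?thesis unfolding input_space_def by (rule measurable_compose[OF measurable_fst])
qed
lemma meas_N[measurable]: "(\<lambda>w. fst (snd w) k) \<in> measurable (input_space lam Bd Sd) (count_space UNIV)"
proof -
  have e: "measurable (PiM UNIV (\<lambda>_::nat. measure_pmf Bd)) (measure_pmf Bd) = measurable (PiM UNIV (\<lambda>_::nat. measure_pmf Bd)) (count_space UNIV)"
    by (rule measurable_cong_sets) simp_all
  have "(\<lambda>x. x k) \<in> measurable (PiM UNIV (\<lambda>_::nat. measure_pmf Bd)) (measure_pmf Bd)"
    by (rule measurable_component_singleton) simp
  then have "(\<lambda>x. x k) \<in> measurable (PiM UNIV (\<lambda>_::nat. measure_pmf Bd)) (count_space UNIV)" using e by simp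
  then show ?thesis unfolding input_space_def
    by (intro measurable_compose[OF measurable_snd] measurable_compose[OF measurable_fst])
qed

lemma meas_V[measurable]: "(\<lambda>w. snd (snd w) k j) \<in> borel_measurable (input_space lam Bd Sd)"
proof -
  have e: "measurable (PiM UNIV (\<lambda>_::nat. Sd)) Sd = measurable (PiM UNIV (\<lambda>_::nat. Sd)) borel"
    by (rule measurable_cong_sets) (simp_all add: Sb)
  have "(\<lambda>x. x j) \<in> measurable (PiM UNIV (\<lambda>_::nat. Sd)) Sd"
    by (rule measurable_component_singleton) simp
  then have 1: "(\<lambda>x. x j) \<in> borel_measurable (PiM UNIV (\<lambda>_::nat. Sd))" using e by simp
  have 2: "(\<lambda>x. x k) \<in> measurable (PiM UNIV (\<lambda>_::nat. PiM UNIV (\<lambda>_::nat. Sd))) (PiM UNIV (\<lambda>_::nat. Sd))"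
    by (rule measurable_component_singleton) simp
  show ?thesis unfolding input_space_def
    by (intro measurable_compose[OF measurable_snd] measurable_compose[OF measurable_snd] measurable_compose[OF 2 1])
qed

lemma mlf_gs: "mlf (input_space lam Bd Sd) (\<lambda>w. gs xs w k)"
proof (induction k)
  case 0
  show ?case unfolding gs.simps bt_def
    by (intro mlf_append mlf_batch mlf_const) measurable
next
  case (Suc k)
  show ?case unfolding gs.simps bt_def
    by (intro mlf_append mlf_batch mlf_serve Suc) measurable
qed

lemma pred_gs_len: "Measurable.pred (input_space lam Bd Sd) (\<lambda>w. P (length (gs xs w k)))"
  by (rule mlf_pred_length[OF mlf_gs])

lemma pred_serve_gs: "Measurable.pred (input_space lam Bd Sd) (\<lambda>w. serve (fst w k) (gs xs w k) \<noteq> [])"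
proof -
  have "Measurable.pred (input_space lam Bd Sd) (\<lambda>w. length (serve (fst w k) (gs xs w k)) \<noteq> 0)"
    by (intro mlf_pred_length mlf_serve mlf_gs) measurable
  then show ?thesis by simp
qed

lemma sets_NRn[measurable]: "NRn m k xs \<in> sets (input_space lam Bd Sd)"
proof -
  have "Measurable.pred (input_space lam Bd Sd) (\<lambda>w. w \<in> NRn m k xs)"
    unfolding NRn_def mem_Collect_eq
    using pred_serve_gs pred_gs_len by measurable
  then show ?thesis by (simp add: pred_def space_input)
qed

lemma sets_Alv[measurable]: "Alv m k xs \<in> sets (input_space lam Bd Sd)"
proof -
  have "Measurable.pred (input_space lam Bd Sd) (\<lambda>w. w \<in> Alv m k xs)"
    unfolding Alv_def mem_Collect_eq
    using pred_serve_gs pred_gs_len by measurable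
  then show ?thesis by (simp add: pred_def space_input)
qed

lemma sets_NRall[measurable]: "NRall m xs \<in> sets (input_space lam Bd Sd)"
  unfolding NRall_eq by measurable

end


context fixes lam :: real and Bd :: "nat pmf" and Sd :: "real measure"
  assumes lam: "lam > 0" and Sp: "prob_space Sd" and Sb: "sets Sd = sets borel"
begin

abbreviation "Om \<equiv> input_space lam Bd Sd"
abbreviation "RR \<equiv> Rm lam Bd Sd"

lemma probOm: "prob_space Om" by (rule prob_input[OF lam Sp])
lemma probRR: "prob_space RR" by (rule prob_Rm[OF lam Sp])

lemma meas_inner:
  assumes X: "X \<in> sets Om"
  shows "(\<lambda>r. \<integral>\<^sup>+w. indicator X (consw r w) \<partial>Om) \<in> borel_measurable RR"
proof -
  interpret Om: prob_space Om by (rule probOm)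
  have "(\<lambda>(r, w). indicator X (consw r w) :: ennreal) \<in> borel_measurable (RR \<Otimes>\<^sub>M Om)"
    using X by measurable
  then show ?thesis by (rule Om.borel_measurable_nn_integral_fst[where f="\<lambda>(r,w). indicator X (consw r w)", simplified])
qed

lemma emeasure_decomp:
  assumes X: "X \<in> sets Om"
  shows "emeasure Om X = (\<integral>\<^sup>+r. \<integral>\<^sup>+w. indicator X (consw r w) \<partial>Om \<partial>RR)"
proof -
  have "emeasure Om X = (\<integral>\<^sup>+w. indicator X w \<partial>Om)" using X by simp
  also have "\<dots> = (\<integral>\<^sup>+r. \<integral>\<^sup>+w. indicator X (consw r w) \<partial>Om \<partial>RR)"
    by (rule decomp[OF lam Sp]) (use X in measurable)
  finally show ?thesis .
qed

abbreviation blen :: "real \<times> nat \<times> (nat \<Rightarrow> real) \<Rightarrow> real list \<Rightarrow> nat" where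
  "blen r xs \<equiv> length (bt (fst (snd r)) (snd (snd r)) @ xs)"

lemma inner_NRn0:
  "(\<integral>\<^sup>+w. indicator (NRn m 0 xs) (consw r w) \<partial>Om) = (if blen r xs < m then 1 else 0)"
proof -
  interpret Om: prob_space Om by (rule probOm)
  show ?thesis by (simp add: indicator_def NRn_0 Om.emeasure_space_1)
qed

lemma inner_NRn:
  "(\<integral>\<^sup>+w. indicator (NRn m (Suc k) xs) (consw r w) \<partial>Om) =
    (if blen r xs < m then (if nxt xs r = [] then 1 else emeasure Om (NRn m k (nxt xs r))) else 0)"
proof -
  interpret Om: prob_space Om by (rule probOm)
  have "\<And>w. indicator (NRn m (Suc k) xs) (consw r w) = (if blen r xs < m then (if nxt xs r = [] then 1 else indicator (NRn m k (nxt xs r)) w) else (0::ennreal))"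
    by (simp add: indicator_def NRn_Suc)
  then show ?thesis using Sb by (simp add: Om.emeasure_space_1)
qed

lemma inner_Alv:
  "(\<integral>\<^sup>+w. indicator (Alv m (Suc k) xs) (consw r w) \<partial>Om) =
    (if blen r xs < m \<and> nxt xs r \<noteq> [] then emeasure Om (Alv m k (nxt xs r)) else 0)"
proof (cases "blen r xs < m \<and> nxt xs r \<noteq> []")
  case True
  then have "\<And>w. indicator (Alv m (Suc k) xs) (consw r w) = (indicator (Alv m k (nxt xs r)) w :: ennreal)"
    by (simp add: indicator_def Alv_Suc)
  then show ?thesis using True by (simp add: sets_Alv[OF Sb])
next
  case False
  then have z: "\<And>w. indicator (Alv m (Suc k) xs) (consw r w) = (0 :: ennreal)"
    by (auto simp: indicator_def Alv_Suc)
  show ?thesis by (subst if_not_P[OF False]) (simp add: z)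
qed

end


primrec wsum :: "(nat \<Rightarrow> real) \<Rightarrow> real list \<Rightarrow> real" where
  "wsum q [] = 0"
| "wsum q (x # xs) = q (Suc (length xs)) * x + wsum q xs"

definition Gf :: "(nat \<Rightarrow> real) \<Rightarrow> real \<Rightarrow> real list \<Rightarrow> real" where
  "Gf q lam ys = (1 - q (length ys)) * exp (- lam * wsum q ys)"

lemma wsum_nth: "wsum q ys = (\<Sum>i<length ys. q (length ys - i) * ys ! i)"
  by (induction ys) (simp_all add: sum.lessThan_Suc_shift del: sum.lessThan_Suc)

lemma meas_Gf:
  assumes "mlf M g"
  shows "(\<lambda>x. Gf q lam (g x)) \<in> borel_measurable M"
proof -
  have "(\<lambda>x. (\<lambda>L x. (1 - q L) * exp (- lam * (\<Sum>i<L. q (L - i) * g x ! i))) (length (g x)) x) \<in> borel_measurable M"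
    apply (rule measurable_compose_countable[OF _ mlf_length[OF assms]])
    using mlf_nth[OF assms] by measurable
  then show ?thesis by (simp add: Gf_def wsum_nth)
qed

lemma wsum_nonneg: "(\<And>d. 0 \<le> q d) \<Longrightarrow> \<forall>x\<in>set ys. 0 \<le> x \<Longrightarrow> 0 \<le> wsum q ys"
  by (induction ys) auto

lemma Gf_le1: "(\<And>d. 0 \<le> q d) \<Longrightarrow> (\<And>d. q d \<le> 1) \<Longrightarrow> lam > 0 \<Longrightarrow> \<forall>x\<in>set ys. 0 \<le> x \<Longrightarrow> Gf q lam ys \<le> 1"
proof -
  assume q0: "\<And>d. 0 \<le> q d" and q1: "\<And>d. q d \<le> 1" and lam: "lam > 0" and ys: "\<forall>x\<in>set ys. 0 \<le> x"
  have "0 \<le> wsum q ys" by (rule wsum_nonneg[OF q0 ys])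
  then have "exp (- lam * wsum q ys) \<le> 1" using lam by (simp add: mult_nonneg_nonneg)
  moreover have "0 \<le> 1 - q (length ys)" "1 - q (length ys) \<le> 1" using q0 q1 by (auto simp: algebra_simps)
  ultimately show ?thesis unfolding Gf_def by (simp add: mult_le_one)
qed

lemma Gf_nonneg: "(\<And>d. q d \<le> 1) \<Longrightarrow> 0 \<le> Gf q lam ys"
  unfolding Gf_def by (simp add: algebra_simps)

lemma serve_nonneg: "\<forall>x\<in>set ys. 0 \<le> x \<Longrightarrow> \<forall>x\<in>set (serve d ys). 0 \<le> x"
  by (induction ys arbitrary: d) auto

lemma mlf_serve_const: "mlf borel (\<lambda>a. serve a ys)"
  by (rule mlf_serve[OF _ mlf_const]) simp

lemma Phi:
  fixes q :: "nat \<Rightarrow> real"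
  assumes lam: "lam > 0" and q0: "\<And>d. 0 \<le> q d" and q1: "\<And>d. q d \<le> 1" and ys: "\<forall>y\<in>set ys. 0 \<le> y"
  shows "(\<integral>\<^sup>+a. (if serve a ys = [] then 1 else ennreal (Gf q lam (serve a ys))) \<partial>exp_dist lam) = ennreal (exp (- lam * wsum q ys))"
  using ys
proof (induction ys)
  case Nil
  interpret prob_space "exp_dist lam" by (rule prob_exp_dist[OF lam])
  show ?case by (simp add: emeasure_space_1)
next
  case (Cons y t)
  define L where "L = Suc (length t)"
  define w where "w = wsum q t"
  define ht where "ht = (\<lambda>s. if serve s t = [] then 1 else ennreal (Gf q lam (serve s t)))"
  define ed where "ed = exponential_density lam"
  define P1 where "P1 = (\<lambda>a. lam * exp (- lam * a) * ((1 - q L) * exp (- lam * (q L * (y - a) + w))))"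
  have y0: "0 \<le> y" and t0: "\<forall>x\<in>set t. 0 \<le> x" using Cons.prems by auto
  have IH: "(\<integral>\<^sup>+s. ht s \<partial>exp_dist lam) = ennreal (exp (- lam * w))" using Cons.IH t0 by (simp add: ht_def w_def)
  have mht[measurable]: "ht \<in> borel_measurable borel"
  proof -
    have "Measurable.pred borel (\<lambda>s. length (serve s t) = 0)" by (rule mlf_pred_length[OF mlf_serve_const])
    then have [measurable]: "Measurable.pred borel (\<lambda>s. serve s t = [])" by simp
    show ?thesis unfolding ht_def using meas_Gf[OF mlf_serve_const] by measurable
  qed
  have med[measurable]: "ed \<in> borel_measurable borel" unfolding ed_def by measurable
  have h_eq: "\<And>a. (if serve a (y#t) = [] then 1 else ennreal (Gf q lam (serve a (y#t)))) =
     (if a < y then ennreal ((1 - q L) * exp (- lam * (q L * (y - a) + w))) else ht (a - y))"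
    by (simp add: ht_def Gf_def L_def w_def)
  have "(\<integral>\<^sup>+a. (if serve a (y#t) = [] then 1 else ennreal (Gf q lam (serve a (y#t)))) \<partial>exp_dist lam)
     = (\<integral>\<^sup>+a. (if a < y then ennreal ((1 - q L) * exp (- lam * (q L * (y - a) + w))) else ht (a - y)) \<partial>exp_dist lam)"
    by (simp only: h_eq)
  also have "\<dots> = (\<integral>\<^sup>+a. ennreal (ed a) * (if a < y then ennreal ((1 - q L) * exp (- lam * (q L * (y - a) + w))) else ht (a - y)) \<partial>lborel)"
    unfolding exp_dist_def ed_def by (rule nn_integral_density) measurable
  also have "\<dots> = (\<integral>\<^sup>+a. ennreal (P1 a) * indicator {0..y} a + ennreal (exp (- lam * y)) * (ennreal (ed (a - y)) * ht (a - y)) \<partial>lborel)"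
  proof (rule nn_integral_cong_AE)
    show "AE a in lborel. ennreal (ed a) * (if a < y then ennreal ((1 - q L) * exp (- lam * (q L * (y - a) + w))) else ht (a - y))
       = ennreal (P1 a) * indicator {0..y} a + ennreal (exp (- lam * y)) * (ennreal (ed (a - y)) * ht (a - y))"
      using AE_lborel_singleton[of y]
    proof eventually_elim
      case (elim a)
      show ?case
      proof (cases "a < y")
        case True
        have e2: "ed (a - y) = 0" using True by (simp add: ed_def exponential_density_def)
        show ?thesis
        proof (cases "a < 0")
          case True
          then show ?thesis using e2 by (simp add: ed_def exponential_density_def)
        next
          case False
          have "ennreal (ed a) * ennreal ((1 - q L) * exp (- lam * (q L * (y - a) + w))) = ennreal (ed a * ((1 - q L) * exp (- lam * (q L * (y - a) + w))))"
            using False lam q1[of L] by (intro ennreal_mult[symmetric]) (auto simp: ed_def exponential_density_def)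
          also have "ed a * ((1 - q L) * exp (- lam * (q L * (y - a) + w))) = P1 a"
            using False by (simp add: ed_def exponential_density_def P1_def mult.commute)
          finally show ?thesis using False \<open>a < y\<close> e2 by simp
        qed
      next
        case False
        then have ay: "y < a" using elim by simp
        have "ed a = exp (- lam * y) * ed (a - y)"
          using ay y0 by (simp add: ed_def exponential_density_def algebra_simps flip: exp_add)
        moreover have "0 \<le> ed (a - y)" using lam by (simp add: ed_def exponential_density_def)
        ultimately show ?thesis using ay False
          by (simp add: ennreal_mult mult.assoc)
      qed
    qed
  qed
  also have "\<dots> = (\<integral>\<^sup>+a. ennreal (P1 a) * indicator {0..y} a \<partial>lborel) + (\<integral>\<^sup>+a. ennreal (exp (- lam * y)) * (ennreal (ed (a - y)) * ht (a - y)) \<partial>lborel)"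
    by (rule nn_integral_add) (auto simp: P1_def)
  also have "(\<integral>\<^sup>+a. ennreal (P1 a) * indicator {0..y} a \<partial>lborel) = ennreal ((exp (- lam * q L * y) - exp (- lam * y)) * exp (- lam * w))"
  proof -
    define F where "F = (\<lambda>a. - exp (- lam * q L * y) * exp (- lam * (1 - q L) * a) * exp (- lam * w))"
    have "(\<integral>\<^sup>+a. ennreal (P1 a) * indicator {0..y} a \<partial>lborel) = F y - F 0"
    proof (rule nn_integral_FTC_Icc)
      show "P1 \<in> borel_measurable borel" unfolding P1_def by measurable
      show "0 \<le> y" by (rule y0)
      fix a assume "a \<in> {0..y}"
      show "0 \<le> P1 a" unfolding P1_def using lam q1[of L] by (auto intro!: mult_nonneg_nonneg)
      show "(F has_real_derivative P1 a) (at a)"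
        unfolding F_def P1_def
        by (auto intro!: derivative_eq_intros simp: algebra_simps simp flip: exp_add)
    qed
    also have "F y - F 0 = (exp (- lam * q L * y) - exp (- lam * y)) * exp (- lam * w)"
      unfolding F_def by (simp add: algebra_simps flip: exp_add)
    finally show ?thesis .
  qed
  also have "(\<integral>\<^sup>+a. ennreal (exp (- lam * y)) * (ennreal (ed (a - y)) * ht (a - y)) \<partial>lborel)
      = ennreal (exp (- lam * y)) * (\<integral>\<^sup>+a. ennreal (ed (a - y)) * ht (a - y) \<partial>lborel)"
    by (rule nn_integral_cmult) measurable
  also have "(\<integral>\<^sup>+a. ennreal (ed (a - y)) * ht (a - y) \<partial>lborel) = (\<integral>\<^sup>+s. ennreal (ed s) * ht s \<partial>lborel)"
    using nn_integral_real_affine[of "\<lambda>s. ennreal (ed s) * ht s" 1 "- y"] by simp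
  also have "\<dots> = (\<integral>\<^sup>+s. ht s \<partial>exp_dist lam)"
    unfolding exp_dist_def ed_def by (rule nn_integral_density[symmetric]) measurable
  also have "\<dots> = ennreal (exp (- lam * w))" by (rule IH)
  also have "ennreal ((exp (- lam * q L * y) - exp (- lam * y)) * exp (- lam * w)) + ennreal (exp (- lam * y)) * ennreal (exp (- lam * w))
      = ennreal (exp (- lam * wsum q (y # t)))"
  proof -
    have "exp (- lam * y) \<le> exp (- lam * q L * y)"
      using lam y0 q1[of L] by (simp add: mult_left_mono mult_right_mono)
    then show ?thesis
      by (simp add: ennreal_mult''[symmetric] ennreal_plus[symmetric] L_def w_def algebra_simps del: ennreal_plus flip: exp_add)
  qed
  finally show ?case .
qed


lemma iterP:
  assumes "prob_space M" and f[measurable]: "f \<in> borel_measurable (PiM UNIV (\<lambda>_::nat. M))"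
  shows "(\<integral>\<^sup>+X. f X \<partial>PiM UNIV (\<lambda>_::nat. M)) = (\<integral>\<^sup>+x. \<integral>\<^sup>+X. f (case_nat x X) \<partial>PiM UNIV (\<lambda>_::nat. M) \<partial>M)"
proof -
  interpret sequence_space M by (simp add: sequence_space_def product_prob_space_def product_sigma_finite_def prob_space_imp_sigma_finite assms product_prob_space_axioms_def)
  have "(\<integral>\<^sup>+X. f X \<partial>S) = (\<integral>\<^sup>+X. f X \<partial>distr (M \<Otimes>\<^sub>M S) S (\<lambda>(s, \<omega>). case_nat s \<omega>))"
    by (simp add: PiM_iter)
  also have "\<dots> = (\<integral>\<^sup>+X. f ((\<lambda>(s, \<omega>). case_nat s \<omega>) X) \<partial>(M \<Otimes>\<^sub>M S))"
    by (rule nn_integral_distr) auto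
  also have "\<dots> = (\<integral>\<^sup>+x. \<integral>\<^sup>+X. f (case_nat x X) \<partial>S \<partial>M)"
    by (subst P.nn_integral_fst[symmetric]) auto
  finally show ?thesis .
qed

lemma nn_integral_PiM_prod:
  assumes M: "prob_space M" and g: "\<And>j. g j \<in> borel_measurable M"
  shows "(\<integral>\<^sup>+v. (\<Prod>j<n. g j (v j)) \<partial>PiM UNIV (\<lambda>_::nat. M)) = (\<Prod>j<n. \<integral>\<^sup>+x. g j x \<partial>M)"
  using g
proof (induction n arbitrary: g)
  case 0
  interpret prob_space "PiM UNIV (\<lambda>_::nat. M)" by (rule prob_PiM[OF M])
  show ?case by (simp add: emeasure_space_1)
next
  case (Suc n)
  note [measurable] = Suc.prems
  have "(\<integral>\<^sup>+v. (\<Prod>j<Suc n. g j (v j)) \<partial>PiM UNIV (\<lambda>_::nat. M))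
     = (\<integral>\<^sup>+x. \<integral>\<^sup>+X. (\<Prod>j<Suc n. g j (case_nat x X j)) \<partial>PiM UNIV (\<lambda>_::nat. M) \<partial>M)"
    by (rule iterP[OF M]) measurable
  also have "\<dots> = (\<integral>\<^sup>+x. g 0 x * \<integral>\<^sup>+X. (\<Prod>j<n. g (Suc j) (X j)) \<partial>PiM UNIV (\<lambda>_::nat. M) \<partial>M)"
    by (intro nn_integral_cong) (simp add: prod.lessThan_Suc_shift nn_integral_cmult del: prod.lessThan_Suc)
  also have "\<dots> = (\<integral>\<^sup>+x. g 0 x * (\<Prod>j<n. \<integral>\<^sup>+x. g (Suc j) x \<partial>M) \<partial>M)"
    using Suc.IH[of "\<lambda>j. g (Suc j)"] by simp
  also have "\<dots> = (\<integral>\<^sup>+x. g 0 x \<partial>M) * (\<Prod>j<n. \<integral>\<^sup>+x. g (Suc j) x \<partial>M)"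
    by (rule nn_integral_multc) measurable
  also have "\<dots> = (\<Prod>j<Suc n. \<integral>\<^sup>+x. g j x \<partial>M)"
    by (simp add: prod.lessThan_Suc_shift del: prod.lessThan_Suc)
  finally show ?case .
qed

definition cc :: "real measure \<Rightarrow> real \<Rightarrow> real \<Rightarrow> real" where
  "cc Sd lam x = (\<integral>s. exp (- lam * x * s) \<partial>Sd)"

lemma cc_props:
  assumes Sp: "prob_space Sd" and Sb: "sets Sd = sets borel" and Sn: "AE s in Sd. 0 \<le> s"
    and lam: "lam > 0" and x: "0 \<le> x"
  shows "(\<integral>\<^sup>+s. ennreal (exp (- lam * x * s)) \<partial>Sd) = ennreal (cc Sd lam x)"
    and "0 \<le> cc Sd lam x" and "cc Sd lam x \<le> 1"
    and "integrable Sd (\<lambda>s. exp (- lam * x * s))"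
proof -
  interpret prob_space Sd by (rule Sp)
  have m: "(\<lambda>s. exp (- lam * x * s)) \<in> borel_measurable Sd" using Sb by (simp add: measurable_cong_sets[OF Sb refl])
  have b: "AE s in Sd. norm (exp (- lam * x * s)) \<le> 1"
    using Sn by eventually_elim (use lam x in \<open>simp add: mult_nonneg_nonneg\<close>)
  show int: "integrable Sd (\<lambda>s. exp (- lam * x * s))" by (rule integrable_const_bound[OF b m])
  show "(\<integral>\<^sup>+s. ennreal (exp (- lam * x * s)) \<partial>Sd) = ennreal (cc Sd lam x)"
    unfolding cc_def by (rule nn_integral_eq_integral[OF int]) simp
  show "0 \<le> cc Sd lam x" unfolding cc_def by simp
  have "cc Sd lam x \<le> (\<integral>s. 1 \<partial>Sd)" unfolding cc_def
    by (rule integral_mono_AE[OF int]) (use b in auto)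
  then show "cc Sd lam x \<le> 1" by (simp add: prob_space)
qed

primrec Qi :: "real \<Rightarrow> nat pmf \<Rightarrow> real measure \<Rightarrow> nat \<Rightarrow> nat \<Rightarrow> nat \<Rightarrow> real" where
  "Qi lam Bd Sd m 0 d = 1"
| "Qi lam Bd Sd m (Suc k) d = (if m \<le> d then 1 else
     1 - (\<integral>n. (if d + n < m then \<Prod>j<n. cc Sd lam (Qi lam Bd Sd m k (d + j + 1)) else 0) \<partial>measure_pmf Bd))"

definition qf :: "real \<Rightarrow> nat pmf \<Rightarrow> real measure \<Rightarrow> nat \<Rightarrow> nat \<Rightarrow> real" where
  "qf lam Bd Sd m d = Qi lam Bd Sd m m d"

lemma pmf_int_01:
  fixes h :: "nat \<Rightarrow> real"
  assumes "\<And>n. 0 \<le> h n" "\<And>n. h n \<le> 1"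
  shows "integrable (measure_pmf Bd) h" "0 \<le> (\<integral>n. h n \<partial>measure_pmf Bd)" "(\<integral>n. h n \<partial>measure_pmf Bd) \<le> 1"
proof -
  show int: "integrable (measure_pmf Bd) h"
  proof -
    have fm: "finite_measure (measure_pmf Bd)" using prob_space_measure_pmf[of Bd] by (simp add: prob_space_def)
    show ?thesis by (rule finite_measure.integrable_const_bound[OF fm, where B=1]) (use assms in auto)
  qed
  show "0 \<le> (\<integral>n. h n \<partial>measure_pmf Bd)" using assms by simp
  have "(\<integral>n. h n \<partial>measure_pmf Bd) \<le> (\<integral>n. 1 \<partial>measure_pmf Bd)"
    by (rule integral_mono[OF int]) (use assms in auto)
  then show "(\<integral>n. h n \<partial>measure_pmf Bd) \<le> 1" by simp
qed

context fixes lam :: real and Bd :: "nat pmf" and Sd :: "real measure"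
  assumes lam: "lam > 0" and Sp: "prob_space Sd" and Sb: "sets Sd = sets borel" and Sn: "AE s in Sd. 0 \<le> s"
begin

lemma prod_cc_01:
  assumes "\<And>j. 0 \<le> f j" "\<And>j. f j \<le> 1"
  shows "0 \<le> (\<Prod>j<n. cc Sd lam (f j))" "(\<Prod>j<n. cc Sd lam (f j)) \<le> 1"
  using cc_props(2,3)[OF Sp Sb Sn lam] assms by (auto intro: prod_nonneg prod_le_1)

lemma Qi_01: "0 \<le> Qi lam Bd Sd m k d \<and> Qi lam Bd Sd m k d \<le> 1"
proof (induction k arbitrary: d)
  case 0 then show ?case by simp
next
  case (Suc k)
  let ?h = "\<lambda>n. (if d + n < m then \<Prod>j<n. cc Sd lam (Qi lam Bd Sd m k (d + j + 1)) else 0)"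
  have "\<And>n. 0 \<le> ?h n" "\<And>n. ?h n \<le> 1" using prod_cc_01[of "\<lambda>j. Qi lam Bd Sd m k (d + j + 1)"] Suc.IH by auto
  from pmf_int_01[OF this, of Bd] show ?case by auto
qed

lemma Qi_stable: "m - d \<le> k \<Longrightarrow> Qi lam Bd Sd m k d = Qi lam Bd Sd m (Suc k) d"
proof (induction k arbitrary: d)
  case 0 then show ?case by simp
next
  case (Suc k)
  show ?case
  proof (cases "m \<le> d")
    case True then show ?thesis by simp
  next
    case False
    have "\<And>n j. d + n < m \<Longrightarrow> j < n \<Longrightarrow> Qi lam Bd Sd m k (d + j + 1) = Qi lam Bd Sd m (Suc k) (d + j + 1)"
      using Suc by (intro Suc.IH) auto
    then have "\<And>n. (if d + n < m then \<Prod>j<n. cc Sd lam (Qi lam Bd Sd m k (d + j + 1)) else 0)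
       = (if d + n < m then \<Prod>j<n. cc Sd lam (Qi lam Bd Sd m (Suc k) (d + j + 1)) else 0)"
      by (auto intro!: prod.cong)
    then show ?thesis using False by (simp only: Qi.simps)
  qed
qed

lemma qf_01: "0 \<le> qf lam Bd Sd m d" "qf lam Bd Sd m d \<le> 1"
  unfolding qf_def using Qi_01 by auto

lemma qf_ge: "m \<le> d \<Longrightarrow> qf lam Bd Sd m d = 1"
  unfolding qf_def by (cases m) simp_all

lemma qf_eq: "d < m \<Longrightarrow> 1 - qf lam Bd Sd m d =
   (\<integral>n. (if d + n < m then \<Prod>j<n. cc Sd lam (qf lam Bd Sd m (d + j + 1)) else 0) \<partial>measure_pmf Bd)"
proof -
  assume "d < m"
  have "Qi lam Bd Sd m m d = Qi lam Bd Sd m (Suc m) d" by (rule Qi_stable) simp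
  then show ?thesis using \<open>d < m\<close> unfolding qf_def by simp
qed

end


lemma length_bt[simp]: "length (bt n v) = n"
  by (simp add: bt_def)

lemma bt_Suc: "bt (Suc n) v = v n # bt n v"
  by (simp add: bt_def)

lemma set_bt: "set (bt n v) = v ` {..<n}"
  by (auto simp: bt_def)

lemma wsum_bt: "wsum q (bt n v @ xs) = (\<Sum>j<n. q (length xs + j + 1) * v j) + wsum q xs"
  by (induction n) (simp_all add: bt_Suc algebra_simps bt_def)

context fixes lam :: real and Bd :: "nat pmf" and Sd :: "real measure" and m :: nat
  assumes lam: "lam > 0" and Sp: "prob_space Sd" and Sb: "sets Sd = sets borel" and Sn: "AE s in Sd. 0 \<le> s"
begin

abbreviation "q \<equiv> qf lam Bd Sd m"
abbreviation "EA \<equiv> exp_dist lam"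
abbreviation "PS \<equiv> PiM UNIV (\<lambda>_::nat. Sd)"
abbreviation "RM \<equiv> Rm lam Bd Sd"

lemma q01: "0 \<le> q d" "q d \<le> 1"
  using qf_01[OF lam Sp Sb Sn] by auto

lemma meas_Ra[measurable]: "(\<lambda>r. fst r) \<in> borel_measurable RM"
proof -
  have e: "measurable (Rm lam Bd Sd) (exp_dist lam) = measurable (Rm lam Bd Sd) borel"
    by (rule measurable_cong_sets) (simp_all add: sets_exp_dist)
  have "fst \<in> measurable (Rm lam Bd Sd) (exp_dist lam)" unfolding Rm_def by (rule measurable_fst)
  then show ?thesis using e by simp
qed

lemma meas_Rn[measurable]: "(\<lambda>r. fst (snd r)) \<in> measurable RM (count_space UNIV)"
proof -
  have e: "measurable (Rm lam Bd Sd) (measure_pmf Bd) = measurable (Rm lam Bd Sd) (count_space UNIV)"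
    by (rule measurable_cong_sets) simp_all
  have "(\<lambda>r. fst (snd r)) \<in> measurable (Rm lam Bd Sd) (measure_pmf Bd)" unfolding Rm_def
    by (intro measurable_compose[OF measurable_snd measurable_fst])
  then show ?thesis using e by simp
qed

lemma meas_Rv[measurable]: "(\<lambda>r. snd (snd r) j) \<in> borel_measurable RM"
proof -
  have e: "measurable (PiM UNIV (\<lambda>_::nat. Sd)) Sd = measurable (PiM UNIV (\<lambda>_::nat. Sd)) borel"
    by (rule measurable_cong_sets) (simp_all add: Sb)
  have "(\<lambda>x. x j) \<in> measurable (PiM UNIV (\<lambda>_::nat. Sd)) Sd"
    by (rule measurable_component_singleton) simp
  then have 1: "(\<lambda>x. x j) \<in> borel_measurable (PiM UNIV (\<lambda>_::nat. Sd))" using e by simp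
  show ?thesis unfolding Rm_def
    by (intro measurable_compose[OF measurable_snd] measurable_compose[OF measurable_snd 1])
qed

lemma mlf_RR_bt: "mlf RM (\<lambda>r. bt (fst (snd r)) (snd (snd r)) @ xs)"
  unfolding bt_def by (intro mlf_append mlf_batch mlf_const) measurable

lemma mlf_RR_nxt: "mlf RM (\<lambda>r. nxt xs r)"
  unfolding nxt_def by (intro mlf_serve mlf_RR_bt) measurable

lemma pred_RR_nxt[measurable]: "Measurable.pred RM (\<lambda>r. nxt xs r = [])"
proof -
  have "Measurable.pred RM (\<lambda>r. length (nxt xs r) = 0)" by (rule mlf_pred_length[OF mlf_RR_nxt])
  then show ?thesis by simp
qed

lemma pred_RR_blen[measurable]: "Measurable.pred RM (\<lambda>r. blen r xs < m)"
  by (rule mlf_pred_length[OF mlf_RR_bt])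

lemma meas_RR_G[measurable]: "(\<lambda>r. Gf q lam (nxt xs r)) \<in> borel_measurable RM"
  by (rule meas_Gf[OF mlf_RR_nxt])

lemma batch_int:
  "(\<integral>\<^sup>+v. (if n + length xs < m then ennreal (exp (- lam * wsum q (bt n v @ xs))) else 0) \<partial>PS)
   = (if n + length xs < m then ennreal (exp (- lam * wsum q xs)) * ennreal (\<Prod>j<n. cc Sd lam (q (length xs + j + 1))) else 0)"
proof (cases "n + length xs < m")
  case False then show ?thesis by simp
next
  case True
  have e: "\<And>v. ennreal (exp (- lam * wsum q (bt n v @ xs))) =
     ennreal (exp (- lam * wsum q xs)) * (\<Prod>j<n. ennreal (exp (- lam * q (length xs + j + 1) * v j)))"
    by (simp add: wsum_bt prod_ennreal ennreal_mult[symmetric] exp_sum[symmetric] sum_distrib_left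
        algebra_simps flip: exp_add)
  have mS: "\<And>j. (\<lambda>x. ennreal (exp (- lam * q (length xs + j + 1) * x))) \<in> borel_measurable Sd"
    using Sb by (simp add: measurable_cong_sets[OF Sb refl])
  have "(\<integral>\<^sup>+v. ennreal (exp (- lam * wsum q (bt n v @ xs))) \<partial>PS) =
     ennreal (exp (- lam * wsum q xs)) * (\<integral>\<^sup>+v. (\<Prod>j<n. ennreal (exp (- lam * q (length xs + j + 1) * v j))) \<partial>PS)"
    unfolding e
  proof (rule nn_integral_cmult)
    have "\<And>j. (\<lambda>v. ennreal (exp (- lam * q (length xs + j + 1) * v j))) \<in> borel_measurable PS"
      using measurable_compose[OF measurable_component_singleton[of _ UNIV "\<lambda>_. Sd"] mS] by simp
    then show "(\<lambda>v. \<Prod>j<n. ennreal (exp (- lam * q (length xs + j + 1) * v j))) \<in> borel_measurable PS"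
      by measurable
  qed
  also have "(\<integral>\<^sup>+v. (\<Prod>j<n. ennreal (exp (- lam * q (length xs + j + 1) * v j))) \<partial>PS)
     = (\<Prod>j<n. \<integral>\<^sup>+x. ennreal (exp (- lam * q (length xs + j + 1) * x)) \<partial>Sd)"
    by (rule nn_integral_PiM_prod[OF Sp mS])
  also have "\<dots> = (\<Prod>j<n. ennreal (cc Sd lam (q (length xs + j + 1))))"
    by (intro prod.cong refl cc_props(1)[OF Sp Sb Sn lam] q01)
  also have "\<dots> = ennreal (\<Prod>j<n. cc Sd lam (q (length xs + j + 1)))"
    by (rule prod_ennreal) (intro cc_props(2)[OF Sp Sb Sn lam] q01)
  finally show ?thesis using True by simp
qed

lemma AE_PS_nonneg: "AE v in PS. \<forall>j. 0 \<le> v j"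
  unfolding AE_all_countable
  by (intro allI AE_PiM_component[where M="\<lambda>_. Sd" and P="\<lambda>x. 0 \<le> x"] Sp Sn) auto

lemma TG:
  assumes xs: "\<forall>x\<in>set xs. 0 \<le> x"
  shows "(\<integral>\<^sup>+r. (if blen r xs < m then (if nxt xs r = [] then 1 else ennreal (Gf q lam (nxt xs r))) else 0) \<partial>RM)
     = ennreal (Gf q lam xs)"
proof -
  define F where "F = (\<lambda>r. (if blen r xs < m then (if nxt xs r = [] then 1 else ennreal (Gf q lam (nxt xs r))) else 0 :: ennreal))"
  have mF: "F \<in> borel_measurable RM" unfolding F_def by measurable
  then have mF': "F \<in> borel_measurable (EA \<Otimes>\<^sub>M (measure_pmf Bd \<Otimes>\<^sub>M PS))" by (simp add: Rm_def)
  have pEA: "prob_space EA" by (rule prob_exp_dist[OF lam])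
  have pPS: "prob_space PS" by (rule prob_PiM[OF Sp])
  have sBPS: "sigma_finite_measure (measure_pmf Bd \<Otimes>\<^sub>M PS)"
    by (intro sigma_finite_pair_measure sf_prob pPS prob_space_measure_pmf)
  interpret EAB: pair_sigma_finite EA "measure_pmf Bd \<Otimes>\<^sub>M PS"
    by (simp add: pair_sigma_finite_def sBPS sf_prob[OF pEA])
  let ?L = "length xs"
  have "(\<integral>\<^sup>+r. F r \<partial>RM) = (\<integral>\<^sup>+y. \<integral>\<^sup>+a. F (a, y) \<partial>EA \<partial>(measure_pmf Bd \<Otimes>\<^sub>M PS))"
    unfolding Rm_def by (rule EAB.nn_integral_snd[symmetric, OF mF'])
  also have "\<dots> = (\<integral>\<^sup>+n. \<integral>\<^sup>+v. \<integral>\<^sup>+a. F (a, n, v) \<partial>EA \<partial>PS \<partial>measure_pmf Bd)"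
  proof -
    have "(\<lambda>(y, a). F (a, y)) \<in> borel_measurable ((measure_pmf Bd \<Otimes>\<^sub>M PS) \<Otimes>\<^sub>M EA)"
      using mF' by measurable
    then have "(\<lambda>y. \<integral>\<^sup>+a. F (a, y) \<partial>EA) \<in> borel_measurable (measure_pmf Bd \<Otimes>\<^sub>M PS)"
      using sigma_finite_measure.borel_measurable_nn_integral_fst[OF sf_prob[OF pEA], of "\<lambda>(y, a). F (a, y)"] by simp
    from sigma_finite_measure.nn_integral_fst[OF sf_prob[OF pPS] this] show ?thesis by simp
  qed
  also have "\<dots> = (\<integral>\<^sup>+n. \<integral>\<^sup>+v. (if n + ?L < m then ennreal (exp (- lam * wsum q (bt n v @ xs))) else 0) \<partial>PS \<partial>measure_pmf Bd)"
  proof (rule nn_integral_cong)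
    fix n
    show "(\<integral>\<^sup>+v. \<integral>\<^sup>+a. F (a, n, v) \<partial>EA \<partial>PS) = (\<integral>\<^sup>+v. (if n + ?L < m then ennreal (exp (- lam * wsum q (bt n v @ xs))) else 0) \<partial>PS)"
    proof (rule nn_integral_cong_AE)
    show "AE v in PS. (\<integral>\<^sup>+a. F (a, n, v) \<partial>EA) = (if n + ?L < m then ennreal (exp (- lam * wsum q (bt n v @ xs))) else 0)"
      using AE_PS_nonneg
    proof eventually_elim
      case (elim v)
      show ?case
      proof (cases "n + ?L < m")
        case True
        have val: "\<forall>y\<in>set (bt n v @ xs). 0 \<le> y" using elim xs by (auto simp: set_bt)
        have "\<And>a. F (a, n, v) = (if serve a (bt n v @ xs) = [] then 1 else ennreal (Gf q lam (serve a (bt n v @ xs))))"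
          using True by (simp add: F_def nxt_def)
        then show ?thesis using True Phi[OF lam _ _ val, of q] q01 by simp
      next
        case False
        then have "\<And>a. F (a, n, v) = 0" by (simp add: F_def)
        then show ?thesis using False by simp
      qed
    qed
    qed
  qed
  also have "\<dots> = (\<integral>\<^sup>+n. ennreal (exp (- lam * wsum q xs)) * ennreal (if n + ?L < m then \<Prod>j<n. cc Sd lam (q (?L + j + 1)) else 0) \<partial>measure_pmf Bd)"
    by (intro nn_integral_cong) (simp add: batch_int)
  also have "\<dots> = ennreal (exp (- lam * wsum q xs)) * (\<integral>\<^sup>+n. ennreal (if n + ?L < m then \<Prod>j<n. cc Sd lam (q (?L + j + 1)) else 0) \<partial>measure_pmf Bd)"
    by (rule nn_integral_cmult) simp
  also have "(\<integral>\<^sup>+n. ennreal (if n + ?L < m then \<Prod>j<n. cc Sd lam (q (?L + j + 1)) else 0) \<partial>measure_pmf Bd)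
     = ennreal (\<integral>n. (if n + ?L < m then \<Prod>j<n. cc Sd lam (q (?L + j + 1)) else 0) \<partial>measure_pmf Bd)"
  proof (rule nn_integral_eq_integral)
    have "\<And>n. 0 \<le> (if n + ?L < m then \<Prod>j<n. cc Sd lam (q (?L + j + 1)) else 0)"
      "\<And>n. (if n + ?L < m then \<Prod>j<n. cc Sd lam (q (?L + j + 1)) else 0) \<le> 1"
      using prod_cc_01[OF lam Sp Sb Sn, of "\<lambda>j. q (?L + j + 1)"] q01 by auto
    from pmf_int_01[OF this] show "integrable (measure_pmf Bd) (\<lambda>n. if n + ?L < m then \<Prod>j<n. cc Sd lam (q (?L + j + 1)) else 0)"
      by simp
    show "AE n in measure_pmf Bd. 0 \<le> (if n + ?L < m then \<Prod>j<n. cc Sd lam (q (?L + j + 1)) else 0)"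
      using prod_cc_01[OF lam Sp Sb Sn, of "\<lambda>j. q (?L + j + 1)"] q01 by auto
  qed
  also have "(\<integral>n. (if n + ?L < m then \<Prod>j<n. cc Sd lam (q (?L + j + 1)) else 0) \<partial>measure_pmf Bd) = 1 - q ?L"
  proof (cases "?L < m")
    case True
    show ?thesis using qf_eq[OF lam Sp Sb Sn True] by (simp add: add.commute)
  next
    case False
    then show ?thesis using qf_ge[OF lam Sp Sb Sn, of m ?L] by simp
  qed
  also have "ennreal (exp (- lam * wsum q xs)) * ennreal (1 - q ?L) = ennreal (Gf q lam xs)"
    unfolding Gf_def using q01[of ?L] by (simp add: ennreal_mult[symmetric] mult.commute)
  finally show ?thesis unfolding F_def .
qed

end


lemma serve_nonempty_len: "d < x \<Longrightarrow> serve d (x # xs) = (x - d) # xs"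
  by simp

context fixes lam :: real and Bd :: "nat pmf" and Sd :: "real measure" and m :: nat
  assumes lam: "lam > 0" and Sp: "prob_space Sd" and Sb: "sets Sd = sets borel" and Sn: "AE s in Sd. 0 \<le> s"
begin

abbreviation "qq \<equiv> qf lam Bd Sd m"
abbreviation "OM \<equiv> input_space lam Bd Sd"
abbreviation "RQ \<equiv> Rm lam Bd Sd"

lemma probOM: "prob_space OM" by (rule prob_input[OF lam Sp])

lemma Alv0_space: "Alv m 0 xs = space OM"
  by (simp add: Alv_def space_input[OF Sb])

lemma E_NR0: "emeasure OM (NRn m 0 xs) = (\<integral>\<^sup>+r. (if blen r xs < m then 1 else 0) \<partial>RQ)"
  using emeasure_decomp[OF lam Sp Sb sets_NRn[OF Sb]] inner_NRn0[OF lam Sp Sb] by simp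

lemma E_NR: "emeasure OM (NRn m (Suc k) xs) = (\<integral>\<^sup>+r. (if blen r xs < m then (if nxt xs r = [] then 1 else emeasure OM (NRn m k (nxt xs r))) else 0) \<partial>RQ)"
  using emeasure_decomp[OF lam Sp Sb sets_NRn[OF Sb]] inner_NRn[OF lam Sp Sb] by simp

lemma E_Alv: "emeasure OM (Alv m (Suc k) xs) = (\<integral>\<^sup>+r. (if blen r xs < m \<and> nxt xs r \<noteq> [] then emeasure OM (Alv m k (nxt xs r)) else 0) \<partial>RQ)"
  using emeasure_decomp[OF lam Sp Sb sets_Alv[OF Sb]] inner_Alv[OF lam Sp Sb] by simp

lemma meas_Alv_fun: "(\<lambda>r. if blen r xs < m \<and> nxt xs r \<noteq> [] then emeasure OM (Alv m k (nxt xs r)) else 0) \<in> borel_measurable RQ"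
  using meas_inner[OF lam Sp Sb sets_Alv[OF Sb, of m "Suc k" xs]] inner_Alv[OF lam Sp Sb] by simp

lemma AE_RQ_nonneg: "AE r in RQ. \<forall>j. 0 \<le> snd (snd r) j"
proof -
  have pEA: "prob_space (exp_dist lam)" by (rule prob_exp_dist[OF lam])
  have pPS: "prob_space (PiM UNIV (\<lambda>_::nat. Sd))" by (rule prob_PiM[OF Sp])
  have sBPS: "sigma_finite_measure (measure_pmf Bd \<Otimes>\<^sub>M PiM UNIV (\<lambda>_::nat. Sd))"
    by (intro sigma_finite_pair_measure sf_prob pPS prob_space_measure_pmf)
  interpret EAB: pair_sigma_finite "exp_dist lam" "measure_pmf Bd \<Otimes>\<^sub>M PiM UNIV (\<lambda>_::nat. Sd)"
    by (simp add: pair_sigma_finite_def sBPS sf_prob[OF pEA])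
  interpret BS: pair_sigma_finite "measure_pmf Bd" "PiM UNIV (\<lambda>_::nat. Sd)"
    by (simp add: pair_sigma_finite_def sf_prob[OF pPS] sf_prob[OF prob_space_measure_pmf])
  have m1: "Measurable.pred RQ (\<lambda>r. \<forall>j. 0 \<le> snd (snd r) j)"
    using meas_Rv[OF lam Sp Sb Sn] by measurable
  have m2: "Measurable.pred (measure_pmf Bd \<Otimes>\<^sub>M PiM UNIV (\<lambda>_::nat. Sd)) (\<lambda>y. \<forall>j. 0 \<le> snd y j)"
  proof -
    have "\<And>j. (\<lambda>y. snd y j) \<in> borel_measurable (measure_pmf Bd \<Otimes>\<^sub>M PiM UNIV (\<lambda>_::nat. Sd))"
    proof -
      fix j
      have e: "measurable (PiM UNIV (\<lambda>_::nat. Sd)) Sd = measurable (PiM UNIV (\<lambda>_::nat. Sd)) borel"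
        by (rule measurable_cong_sets) (simp_all add: Sb)
      have "(\<lambda>x. x j) \<in> measurable (PiM UNIV (\<lambda>_::nat. Sd)) Sd"
        by (rule measurable_component_singleton) simp
      then have 1: "(\<lambda>x. x j) \<in> borel_measurable (PiM UNIV (\<lambda>_::nat. Sd))" using e by simp
      show "(\<lambda>y. snd y j) \<in> borel_measurable (measure_pmf Bd \<Otimes>\<^sub>M PiM UNIV (\<lambda>_::nat. Sd))"
        by (intro measurable_compose[OF measurable_snd 1])
    qed
    then show ?thesis by measurable
  qed
  have "AE y in measure_pmf Bd \<Otimes>\<^sub>M PiM UNIV (\<lambda>_::nat. Sd). \<forall>j. 0 \<le> snd y j"
  proof (rule BS.AE_pair_measure)
    show "{x \<in> space (measure_pmf Bd \<Otimes>\<^sub>M PiM UNIV (\<lambda>_::nat. Sd)). \<forall>j. 0 \<le> snd x j} \<in> sets (measure_pmf Bd \<Otimes>\<^sub>M PiM UNIV (\<lambda>_::nat. Sd))"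
      using m2 by measurable
    show "AE x in measure_pmf Bd. AE y in PiM UNIV (\<lambda>_::nat. Sd). \<forall>j. 0 \<le> snd (x, y) j"
      using AE_PS_nonneg[OF lam Sp Sb Sn] by simp
  qed
  then have "AE x in RQ. \<forall>j. 0 \<le> snd (snd x) j"
    unfolding Rm_def
    by (intro EAB.AE_pair_measure) (use m1 in \<open>simp_all add: Rm_def\<close>)
  then show ?thesis .
qed

lemma valid_nxt: "\<forall>x\<in>set xs. 0 \<le> x \<Longrightarrow> \<forall>j. 0 \<le> snd (snd (r :: real \<times> nat \<times> (nat \<Rightarrow> real))) j \<Longrightarrow> \<forall>x\<in>set (nxt xs r). 0 \<le> x"
  unfolding nxt_def by (rule serve_nonneg) (auto simp: set_bt)

lemma lower: "\<forall>x\<in>set xs. 0 \<le> x \<Longrightarrow> ennreal (Gf qq lam xs) \<le> emeasure OM (NRn m k xs)"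
proof (induction k arbitrary: xs)
  case 0
  have "ennreal (Gf qq lam xs) = (\<integral>\<^sup>+r. (if blen r xs < m then (if nxt xs r = [] then 1 else ennreal (Gf qq lam (nxt xs r))) else 0) \<partial>RQ)"
    by (rule TG[OF lam Sp Sb Sn 0, symmetric])
  also have "\<dots> \<le> (\<integral>\<^sup>+r. (if blen r xs < m then 1 else 0) \<partial>RQ)"
    using AE_RQ_nonneg
  proof (rule nn_integral_mono_AE[OF eventually_mono])
    fix r :: "real \<times> nat \<times> (nat \<Rightarrow> real)" assume "\<forall>j. 0 \<le> snd (snd r) j"
    then have "\<forall>x\<in>set (nxt xs r). 0 \<le> x" using valid_nxt 0 by blast
    then have "Gf qq lam (nxt xs r) \<le> 1" using Gf_le1[OF _ _ lam] q01[OF lam Sp Sb Sn] by blast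
    then show "(if blen r xs < m then (if nxt xs r = [] then 1 else ennreal (Gf qq lam (nxt xs r))) else 0) \<le> (if blen r xs < m then 1 else 0)"
      by (auto simp: ennreal_le_1)
  qed
  also have "\<dots> = emeasure OM (NRn m 0 xs)" by (rule E_NR0[symmetric])
  finally show ?case .
next
  case (Suc k)
  have "ennreal (Gf qq lam xs) = (\<integral>\<^sup>+r. (if blen r xs < m then (if nxt xs r = [] then 1 else ennreal (Gf qq lam (nxt xs r))) else 0) \<partial>RQ)"
    by (rule TG[OF lam Sp Sb Sn Suc.prems, symmetric])
  also have "\<dots> \<le> (\<integral>\<^sup>+r. (if blen r xs < m then (if nxt xs r = [] then 1 else emeasure OM (NRn m k (nxt xs r))) else 0) \<partial>RQ)"
    using AE_RQ_nonneg
  proof (rule nn_integral_mono_AE[OF eventually_mono])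
    fix r :: "real \<times> nat \<times> (nat \<Rightarrow> real)" assume "\<forall>j. 0 \<le> snd (snd r) j"
    then have "\<forall>x\<in>set (nxt xs r). 0 \<le> x" using valid_nxt Suc.prems by blast
    from Suc.IH[OF this] show "(if blen r xs < m then (if nxt xs r = [] then 1 else ennreal (Gf qq lam (nxt xs r))) else 0) \<le> (if blen r xs < m then (if nxt xs r = [] then 1 else emeasure OM (NRn m k (nxt xs r))) else 0)"
      by auto
  qed
  also have "\<dots> = emeasure OM (NRn m (Suc k) xs)" by (rule E_NR[symmetric])
  finally show ?case .
qed

lemma upper: "\<forall>x\<in>set xs. 0 \<le> x \<Longrightarrow> emeasure OM (NRn m k xs) \<le> ennreal (Gf qq lam xs) + emeasure OM (Alv m k xs)"
proof (induction k arbitrary: xs)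
  case 0
  interpret prob_space OM by (rule probOM)
  have "emeasure OM (NRn m 0 xs) \<le> 1" by (rule emeasure_le_1)
  also have "\<dots> = emeasure OM (Alv m 0 xs)" by (simp add: Alv0_space emeasure_space_1)
  finally show ?case by (simp add: add_increasing)
next
  case (Suc k)
  have "emeasure OM (NRn m (Suc k) xs) = (\<integral>\<^sup>+r. (if blen r xs < m then (if nxt xs r = [] then 1 else emeasure OM (NRn m k (nxt xs r))) else 0) \<partial>RQ)"
    by (rule E_NR)
  also have "\<dots> \<le> (\<integral>\<^sup>+r. (if blen r xs < m then (if nxt xs r = [] then 1 else ennreal (Gf qq lam (nxt xs r))) else 0)
       + (if blen r xs < m \<and> nxt xs r \<noteq> [] then emeasure OM (Alv m k (nxt xs r)) else 0) \<partial>RQ)"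
    using AE_RQ_nonneg
  proof (rule nn_integral_mono_AE[OF eventually_mono])
    fix r :: "real \<times> nat \<times> (nat \<Rightarrow> real)" assume "\<forall>j. 0 \<le> snd (snd r) j"
    then have "\<forall>x\<in>set (nxt xs r). 0 \<le> x" using valid_nxt Suc.prems by blast
    from Suc.IH[OF this] show "(if blen r xs < m then (if nxt xs r = [] then 1 else emeasure OM (NRn m k (nxt xs r))) else 0) \<le>
      (if blen r xs < m then (if nxt xs r = [] then 1 else ennreal (Gf qq lam (nxt xs r))) else 0)
       + (if blen r xs < m \<and> nxt xs r \<noteq> [] then emeasure OM (Alv m k (nxt xs r)) else 0)"
      by auto
  qed
  also have "\<dots> = (\<integral>\<^sup>+r. (if blen r xs < m then (if nxt xs r = [] then 1 else ennreal (Gf qq lam (nxt xs r))) else 0) \<partial>RQ)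
       + (\<integral>\<^sup>+r. (if blen r xs < m \<and> nxt xs r \<noteq> [] then emeasure OM (Alv m k (nxt xs r)) else 0) \<partial>RQ)"
  proof (rule nn_integral_add)
    show "(\<lambda>r. if blen r xs < m then (if nxt xs r = [] then 1 else ennreal (Gf qq lam (nxt xs r))) else 0) \<in> borel_measurable RQ"
      using pred_RR_blen[OF lam Sp Sb Sn] pred_RR_nxt[OF lam Sp Sb Sn] meas_RR_G[OF lam Sp Sb Sn] by measurable
    show "(\<lambda>r. if blen r xs < m \<and> nxt xs r \<noteq> [] then emeasure OM (Alv m k (nxt xs r)) else 0) \<in> borel_measurable RQ"
      by (rule meas_Alv_fun)
  qed
  also have "\<dots> = ennreal (Gf qq lam xs) + emeasure OM (Alv m (Suc k) xs)"
    by (simp only: TG[OF lam Sp Sb Sn Suc.prems] E_Alv)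
  finally show ?case .
qed

end


definition Gd :: "real \<Rightarrow> (real \<times> nat \<times> (nat \<Rightarrow> real)) set" where
  "Gd e = {r. 0 < fst (snd r) \<and> fst r < e \<and> e < snd (snd r) (fst (snd r) - 1)}"

lemma Gd_nxt:
  assumes "r \<in> Gd e"
  shows "Suc (length xs) \<le> length (nxt xs r)" "nxt xs r \<noteq> []"
proof -
  obtain a n v where r: "r = (a, n, v)" by (cases r) auto
  from assms r have n: "0 < n" and a: "a < e" and v: "e < v (n - 1)" by (auto simp: Gd_def)
  then obtain n' where n': "n = Suc n'" by (cases n) auto
  have "nxt xs r = (v n' - a) # (bt n' v @ xs)"
    using a v n' r by (simp add: nxt_def bt_Suc)
  then show "Suc (length xs) \<le> length (nxt xs r)" "nxt xs r \<noteq> []" using n' by auto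
qed

context fixes lam :: real and Bd :: "nat pmf" and Sd :: "real measure" and m :: nat
  assumes lam: "lam > 0" and Sp: "prob_space Sd" and Sb: "sets Sd = sets borel" and Sn: "AE s in Sd. 0 \<le> s"
    and Bp: "0 \<notin> set_pmf Bd"
begin

lemma RQ_iter:
  assumes mF: "F \<in> borel_measurable (Rm lam Bd Sd)"
  shows "(\<integral>\<^sup>+r. F r \<partial>Rm lam Bd Sd) = (\<integral>\<^sup>+n. \<integral>\<^sup>+v. \<integral>\<^sup>+a. F (a, n, v) \<partial>exp_dist lam \<partial>PiM UNIV (\<lambda>_::nat. Sd) \<partial>measure_pmf Bd)"
proof -
  have mF': "F \<in> borel_measurable (exp_dist lam \<Otimes>\<^sub>M (measure_pmf Bd \<Otimes>\<^sub>M PiM UNIV (\<lambda>_::nat. Sd)))" using mF by (simp add: Rm_def)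
  have pEA: "prob_space (exp_dist lam)" by (rule prob_exp_dist[OF lam])
  have pPS: "prob_space (PiM UNIV (\<lambda>_::nat. Sd))" by (rule prob_PiM[OF Sp])
  have sBPS: "sigma_finite_measure (measure_pmf Bd \<Otimes>\<^sub>M PiM UNIV (\<lambda>_::nat. Sd))"
    by (intro sigma_finite_pair_measure sf_prob pPS prob_space_measure_pmf)
  interpret EAB: pair_sigma_finite "exp_dist lam" "measure_pmf Bd \<Otimes>\<^sub>M PiM UNIV (\<lambda>_::nat. Sd)"
    by (simp add: pair_sigma_finite_def sBPS sf_prob[OF pEA])
  have "(\<integral>\<^sup>+r. F r \<partial>Rm lam Bd Sd) = (\<integral>\<^sup>+y. \<integral>\<^sup>+a. F (a, y) \<partial>exp_dist lam \<partial>(measure_pmf Bd \<Otimes>\<^sub>M PiM UNIV (\<lambda>_::nat. Sd)))"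
    unfolding Rm_def by (rule EAB.nn_integral_snd[symmetric, OF mF'])
  also have "\<dots> = (\<integral>\<^sup>+n. \<integral>\<^sup>+v. \<integral>\<^sup>+a. F (a, n, v) \<partial>exp_dist lam \<partial>PiM UNIV (\<lambda>_::nat. Sd) \<partial>measure_pmf Bd)"
  proof -
    have "(\<lambda>(y, a). F (a, y)) \<in> borel_measurable ((measure_pmf Bd \<Otimes>\<^sub>M PiM UNIV (\<lambda>_::nat. Sd)) \<Otimes>\<^sub>M exp_dist lam)"
      using mF' by measurable
    then have "(\<lambda>y. \<integral>\<^sup>+a. F (a, y) \<partial>exp_dist lam) \<in> borel_measurable (measure_pmf Bd \<Otimes>\<^sub>M PiM UNIV (\<lambda>_::nat. Sd))"
      using sigma_finite_measure.borel_measurable_nn_integral_fst[OF sf_prob[OF pEA], of "\<lambda>(y, a). F (a, y)"] by simp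
    from sigma_finite_measure.nn_integral_fst[OF sf_prob[OF pPS] this] show ?thesis by simp
  qed
  finally show ?thesis .
qed

lemma space_RQ: "space (Rm lam Bd Sd) = UNIV"
proof -
  have "space Sd = UNIV" using sets_eq_imp_space_eq[OF Sb] by simp
  then show ?thesis unfolding Rm_def
    by (simp add: space_pair_measure space_PiM exp_dist_def PiE_def extensional_def)
qed

lemma sets_Gd: "Gd e \<in> sets (Rm lam Bd Sd)"
proof -
  have "(\<lambda>r. (\<lambda>n r. snd (snd r) (n - 1)) (fst (snd r)) r) \<in> borel_measurable (Rm lam Bd Sd)"
    by (rule measurable_compose_countable[OF meas_Rv[OF lam Sp Sb Sn] meas_Rn[OF lam Sp Sb Sn]])
  then have [measurable]: "(\<lambda>r. snd (snd r) (fst (snd r) - 1)) \<in> borel_measurable (Rm lam Bd Sd)" by simp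
  have [measurable]: "(\<lambda>r. fst (snd r)) \<in> measurable (Rm lam Bd Sd) (count_space UNIV)" by (rule meas_Rn[OF lam Sp Sb Sn])
  have [measurable]: "(\<lambda>r. fst r) \<in> borel_measurable (Rm lam Bd Sd)" by (rule meas_Ra[OF lam Sp Sb Sn])
  have "Measurable.pred (Rm lam Bd Sd) (\<lambda>r. r \<in> Gd e)" unfolding Gd_def by measurable
  then show ?thesis by (simp add: pred_def space_RQ)
qed

lemma emeasure_EA_less:
  assumes e: "0 \<le> e"
  shows "emeasure (exp_dist lam) {..<e} = ennreal (1 - exp (- lam * e))"
proof -
  have "emeasure (exp_dist lam) {..<e} = (\<integral>\<^sup>+a. ennreal (exponential_density lam a) * indicator {..<e} a \<partial>lborel)"
    unfolding exp_dist_def by (rule emeasure_density) auto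
  also have "\<dots> = (\<integral>\<^sup>+a. ennreal (lam * exp (- lam * a)) * indicator {0..e} a \<partial>lborel)"
    using AE_lborel_singleton[of e]
    by (intro nn_integral_cong_AE, eventually_elim) (auto simp: exponential_density_def indicator_def mult.commute)
  also have "\<dots> = (- exp (- lam * e)) - (- exp (- lam * 0))"
    by (rule nn_integral_FTC_Icc[OF _ _ _ e]) (use lam in \<open>auto intro!: derivative_eq_intros\<close>)
  finally show ?thesis by simp
qed

definition "pgood e = measure Sd {s. e < s} * (1 - exp (- lam * e))"

lemma pgood_01: "0 \<le> e \<Longrightarrow> 0 \<le> pgood e \<and> pgood e \<le> 1"
proof -
  assume e: "0 \<le> e"
  interpret prob_space Sd by (rule Sp)
  have "exp (- lam * e) \<le> 1" using lam e by simp
  then show ?thesis unfolding pgood_def using prob_le_1[of "{s. e < s}"]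
    by (auto intro!: mult_nonneg_nonneg mult_le_one)
qed

lemma emeasure_Gd:
  assumes e: "0 \<le> e"
  shows "emeasure (Rm lam Bd Sd) (Gd e) = ennreal (pgood e)"
proof -
  interpret S: prob_space Sd by (rule Sp)
  have pPS: "prob_space (PiM UNIV (\<lambda>_::nat. Sd))" by (rule prob_PiM[OF Sp])
  interpret PS: prob_space "PiM UNIV (\<lambda>_::nat. Sd)" by (rule pPS)
  have [measurable]: "{s. e < s} \<in> sets Sd" using Sb by simp
  have "emeasure (Rm lam Bd Sd) (Gd e) = (\<integral>\<^sup>+r. indicator (Gd e) r \<partial>Rm lam Bd Sd)"
    using sets_Gd by simp
  also have "\<dots> = (\<integral>\<^sup>+n. \<integral>\<^sup>+v. \<integral>\<^sup>+a. indicator (Gd e) (a, n, v) \<partial>exp_dist lam \<partial>PiM UNIV (\<lambda>_::nat. Sd) \<partial>measure_pmf Bd)"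
    by (rule RQ_iter) (use sets_Gd in measurable)
  also have "\<dots> = (\<integral>\<^sup>+n. \<integral>\<^sup>+v. ennreal (1 - exp (- lam * e)) * indicator {v. e < v (n - 1)} v \<partial>PiM UNIV (\<lambda>_::nat. Sd) \<partial>measure_pmf Bd)"
  proof (rule nn_integral_cong_AE)
    show "AE n in measure_pmf Bd. (\<integral>\<^sup>+v. \<integral>\<^sup>+a. indicator (Gd e) (a, n, v) \<partial>exp_dist lam \<partial>PiM UNIV (\<lambda>_::nat. Sd)) =
       (\<integral>\<^sup>+v. ennreal (1 - exp (- lam * e)) * indicator {v. e < v (n - 1)} v \<partial>PiM UNIV (\<lambda>_::nat. Sd))"
      unfolding AE_measure_pmf_iff
    proof (intro ballI nn_integral_cong)
      fix n v assume n: "n \<in> set_pmf Bd"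
      then have n0: "0 < n" using Bp by (cases n) auto
      have "\<And>a. indicator (Gd e) (a, n, v) = (indicator {v. e < v (n - 1)} v * indicator {..<e} a :: ennreal)"
        using n0 by (auto simp: Gd_def indicator_def)
      then have "(\<integral>\<^sup>+a. indicator (Gd e) (a, n, v) \<partial>exp_dist lam) = indicator {v. e < v (n - 1)} v * emeasure (exp_dist lam) {..<e}"
        by (simp add: nn_integral_cmult_indicator sets_exp_dist)
      then show "(\<integral>\<^sup>+a. indicator (Gd e) (a, n, v) \<partial>exp_dist lam) = ennreal (1 - exp (- lam * e)) * indicator {v. e < v (n - 1)} v"
        by (simp add: emeasure_EA_less[OF e] mult.commute)
    qed
  qed
  also have "\<dots> = (\<integral>\<^sup>+n. ennreal (1 - exp (- lam * e)) * ennreal (measure Sd {s. e < s}) \<partial>measure_pmf Bd)"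
  proof (rule nn_integral_cong)
    fix n
    have "{v. e < v (n - 1)} = (\<lambda>v. v (n - 1)) -` {s. e < s} \<inter> space (PiM UNIV (\<lambda>_::nat. Sd))"
      using sets_eq_imp_space_eq[OF Sb] by (auto simp: space_PiM)
    moreover have "emeasure (PiM UNIV (\<lambda>_::nat. Sd)) ((\<lambda>v. v (n - 1)) -` {s. e < s} \<inter> space (PiM UNIV (\<lambda>_::nat. Sd)))
        = emeasure (distr (PiM UNIV (\<lambda>_::nat. Sd)) Sd (\<lambda>v. v (n - 1))) {s. e < s}"
      by (rule emeasure_distr[symmetric]) auto
    moreover have "distr (PiM UNIV (\<lambda>_::nat. Sd)) Sd (\<lambda>v. v (n - 1)) = Sd"
      by (rule distr_PiM_component) (use Sp in auto)
    ultimately have "emeasure (PiM UNIV (\<lambda>_::nat. Sd)) {v. e < v (n - 1)} = ennreal (measure Sd {s. e < s})"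
      by (simp add: S.emeasure_eq_measure)
    moreover have "{v. e < v (n - 1)} \<in> sets (PiM UNIV (\<lambda>_::nat. Sd))"
      using \<open>{v. e < v (n - 1)} = _\<close> measurable_component_singleton[of "n - 1" UNIV "\<lambda>_. Sd"]
      by (metis UNIV_I measurable_sets \<open>{s. e < s} \<in> sets Sd\<close>)
    ultimately show "(\<integral>\<^sup>+v. ennreal (1 - exp (- lam * e)) * indicator {v. e < v (n - 1)} v \<partial>PiM UNIV (\<lambda>_::nat. Sd))
       = ennreal (1 - exp (- lam * e)) * ennreal (measure Sd {s. e < s})"
      by (simp add: nn_integral_cmult_indicator)
  qed
  also have "\<dots> = ennreal (pgood e)"
    using lam e by (simp add: pgood_def ennreal_mult[symmetric] mult.commute measure_pmf.emeasure_space_1)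
  finally show ?thesis .
qed

end


context fixes lam :: real and Bd :: "nat pmf" and Sd :: "real measure" and m :: nat
  assumes lam: "lam > 0" and Sp: "prob_space Sd" and Sb: "sets Sd = sets borel" and Sn: "AE s in Sd. 0 \<le> s"
    and Bp: "0 \<notin> set_pmf Bd"
begin

abbreviation "OX \<equiv> input_space lam Bd Sd"

lemma alv_step:
  assumes e: "0 \<le> e"
  shows "m \<le> length xs + j \<Longrightarrow> emeasure OX (Alv m (Suc j) xs) \<le> ennreal (1 - pgood lam Sd e ^ j)"
proof (induction j arbitrary: xs)
  case 0
  have "emeasure OX (Alv m (Suc 0) xs) = (\<integral>\<^sup>+r. (if blen r xs < m \<and> nxt xs r \<noteq> [] then emeasure OX (Alv m 0 (nxt xs r)) else 0) \<partial>Rm lam Bd Sd)"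
    by (rule E_Alv[OF lam Sp Sb Sn])
  also have "\<dots> = 0" using 0 by simp
  finally show ?case by simp
next
  case (Suc j)
  interpret O: prob_space OX by (rule probOM[OF lam Sp Sb Sn])
  interpret R: prob_space "Rm lam Bd Sd" by (rule prob_Rm[OF lam Sp])
  define p where "p = pgood lam Sd e"
  have p01: "0 \<le> p" "p \<le> 1" using pgood_01[OF lam Sp Sb Sn Bp e] by (auto simp: p_def)
  have sG: "Gd e \<in> sets (Rm lam Bd Sd)" by (rule sets_Gd[OF lam Sp Sb Sn Bp])
  have "emeasure OX (Alv m (Suc (Suc j)) xs) = (\<integral>\<^sup>+r. (if blen r xs < m \<and> nxt xs r \<noteq> [] then emeasure OX (Alv m (Suc j) (nxt xs r)) else 0) \<partial>Rm lam Bd Sd)"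
    by (rule E_Alv[OF lam Sp Sb Sn])
  also have "\<dots> \<le> (\<integral>\<^sup>+r. ennreal (1 - p ^ j) * indicator (Gd e) r + 1 * indicator (space (Rm lam Bd Sd) - Gd e) r \<partial>Rm lam Bd Sd)"
  proof (rule nn_integral_mono)
    fix r
    show "(if blen r xs < m \<and> nxt xs r \<noteq> [] then emeasure OX (Alv m (Suc j) (nxt xs r)) else 0)
       \<le> ennreal (1 - p ^ j) * indicator (Gd e) r + 1 * indicator (space (Rm lam Bd Sd) - Gd e) r"
    proof (cases "r \<in> Gd e")
      case True
      have "m \<le> length (nxt xs r) + j" using Gd_nxt(1)[OF True, of xs] Suc.prems by simp
      from Suc.IH[OF this] True show ?thesis by (auto simp: p_def indicator_def)
    next
      case False
      then show ?thesis using O.emeasure_le_1 by (auto simp: indicator_def space_RQ[OF lam Sp Sb Sn Bp])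
    qed
  qed
  also have "\<dots> = ennreal (1 - p ^ j) * emeasure (Rm lam Bd Sd) (Gd e) + 1 * emeasure (Rm lam Bd Sd) (space (Rm lam Bd Sd) - Gd e)"
    using sG by (subst nn_integral_add) (auto simp: nn_integral_cmult_indicator)
  also have "emeasure (Rm lam Bd Sd) (space (Rm lam Bd Sd) - Gd e) = ennreal (1 - p)"
    using sG emeasure_Gd[OF lam Sp Sb Sn Bp e] R.emeasure_space_1 p01
    by (simp add: emeasure_compl p_def ennreal_1[symmetric] ennreal_minus del: ennreal_1)
  also have "ennreal (1 - p ^ j) * emeasure (Rm lam Bd Sd) (Gd e) + 1 * ennreal (1 - p) = ennreal ((1 - p ^ j) * p + (1 - p))"
    using p01 emeasure_Gd[OF lam Sp Sb Sn Bp e]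
    by (simp add: p_def ennreal_mult[symmetric] ennreal_plus[symmetric] power_le_one mult_nonneg_nonneg del: ennreal_plus)
  also have "(1 - p ^ j) * p + (1 - p) = 1 - p ^ Suc j" by (simp add: algebra_simps)
  finally show ?case by (simp add: p_def)
qed

lemma alv_concat:
  assumes C: "\<And>ys. emeasure OX (Alv m j ys) \<le> C"
  shows "emeasure OX (Alv m (k + j) xs) \<le> emeasure OX (Alv m k xs) * C"
proof (induction k arbitrary: xs)
  case 0
  interpret O: prob_space OX by (rule probOM[OF lam Sp Sb Sn])
  have "Alv m 0 xs = space OX" by (rule Alv0_space[OF lam Sp Sb Sn])
  then show ?case using C[of xs] by (simp add: O.emeasure_space_1)
next
  case (Suc k)
  have "emeasure OX (Alv m (Suc k + j) xs) = (\<integral>\<^sup>+r. (if blen r xs < m \<and> nxt xs r \<noteq> [] then emeasure OX (Alv m (k + j) (nxt xs r)) else 0) \<partial>Rm lam Bd Sd)"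
    using E_Alv[OF lam Sp Sb Sn] by simp
  also have "\<dots> \<le> (\<integral>\<^sup>+r. (if blen r xs < m \<and> nxt xs r \<noteq> [] then emeasure OX (Alv m k (nxt xs r)) else 0) * C \<partial>Rm lam Bd Sd)"
    by (intro nn_integral_mono) (use Suc.IH in auto)
  also have "\<dots> = (\<integral>\<^sup>+r. (if blen r xs < m \<and> nxt xs r \<noteq> [] then emeasure OX (Alv m k (nxt xs r)) else 0) \<partial>Rm lam Bd Sd) * C"
    by (rule nn_integral_multc[OF meas_Alv_fun[OF lam Sp Sb Sn]])
  also have "\<dots> = emeasure OX (Alv m (Suc k) xs) * C"
    using E_Alv[OF lam Sp Sb Sn] by simp
  finally show ?case .
qed

lemma alv_pow:
  assumes e: "0 \<le> e"
  shows "emeasure OX (Alv m (n * Suc m) xs) \<le> ennreal ((1 - pgood lam Sd e ^ m) ^ n)"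
proof (induction n arbitrary: xs)
  case 0
  interpret O: prob_space OX by (rule probOM[OF lam Sp Sb Sn])
  have "Alv m 0 xs = space OX" by (rule Alv0_space[OF lam Sp Sb Sn])
  then show ?case by (simp add: O.emeasure_space_1)
next
  case (Suc n)
  have p01: "0 \<le> pgood lam Sd e" "pgood lam Sd e \<le> 1" using pgood_01[OF lam Sp Sb Sn Bp e] by auto
  have C: "\<And>ys. emeasure OX (Alv m (Suc m) ys) \<le> ennreal (1 - pgood lam Sd e ^ m)"
    by (rule alv_step[OF e]) simp
  have "Suc n * Suc m = n * Suc m + Suc m" by simp
  then have "emeasure OX (Alv m (Suc n * Suc m) xs) = emeasure OX (Alv m (n * Suc m + Suc m) xs)"
    by (simp only:)
  also have "\<dots> \<le> emeasure OX (Alv m (n * Suc m) xs) * ennreal (1 - pgood lam Sd e ^ m)"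
    by (rule alv_concat[OF C])
  also have "\<dots> \<le> ennreal ((1 - pgood lam Sd e ^ m) ^ n) * ennreal (1 - pgood lam Sd e ^ m)"
    by (intro mult_right_mono Suc.IH) simp
  also have "\<dots> = ennreal ((1 - pgood lam Sd e ^ m) ^ Suc n)"
    using p01 by (simp add: ennreal_mult[symmetric] power_le_one mult.commute)
  finally show ?case .
qed

lemma NR_lower:
  assumes xs: "\<forall>x\<in>set xs. 0 \<le> x"
  shows "ennreal (Gf (qf lam Bd Sd m) lam xs) \<le> emeasure OX (NRall m xs)"
proof -
  interpret O: prob_space OX by (rule probOM[OF lam Sp Sb Sn])
  have "emeasure OX (NRall m xs) = (INF k. emeasure OX (NRn m k xs))"
    unfolding NRall_eq
    by (rule INF_emeasure_decseq[symmetric]) (auto simp: decseq_def NRn_mono sets_NRn[OF Sb])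
  then show ?thesis using lower[OF lam Sp Sb Sn xs] by (simp add: le_INF_iff)
qed

lemma NR_upper:
  assumes xs: "\<forall>x\<in>set xs. 0 \<le> x" and e: "0 < e" and pos: "0 < pgood lam Sd e"
  shows "emeasure OX (NRall m xs) \<le> ennreal (Gf (qf lam Bd Sd m) lam xs)"
proof -
  define p where "p = pgood lam Sd e"
  define G where "G = Gf (qf lam Bd Sd m) lam xs"
  have p01: "0 < p" "p \<le> 1" using pgood_01[OF lam Sp Sb Sn Bp, of e] e pos by (auto simp: p_def)
  have G0: "0 \<le> G" unfolding G_def by (rule Gf_nonneg) (use q01[OF lam Sp Sb Sn] in auto)
  have b: "emeasure OX (NRall m xs) \<le> ennreal (G + (1 - p ^ m) ^ n)" for n
  proof -
    have "emeasure OX (NRall m xs) \<le> emeasure OX (NRn m (n * Suc m) xs)"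
      by (rule emeasure_mono) (auto simp: NRall_eq sets_NRn[OF Sb])
    also have "\<dots> \<le> ennreal G + emeasure OX (Alv m (n * Suc m) xs)"
      unfolding G_def by (rule upper[OF lam Sp Sb Sn xs])
    also have "\<dots> \<le> ennreal G + ennreal ((1 - p ^ m) ^ n)"
      using alv_pow[of e n xs] e by (simp add: p_def add_left_mono)
    also have "\<dots> = ennreal (G + (1 - p ^ m) ^ n)"
      using G0 p01 by (simp add: ennreal_plus power_le_one)
    finally show ?thesis .
  qed
  have "(\<lambda>n. ennreal (G + (1 - p ^ m) ^ n)) \<longlonglongrightarrow> ennreal (G + 0)"
  proof (intro tendsto_ennrealI tendsto_add tendsto_const LIMSEQ_power_zero)
    have "0 < p ^ m" "p ^ m \<le> 1" using p01 by (auto simp: power_le_one)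
    then show "norm (1 - p ^ m) < 1" by simp
  qed
  then have "(\<lambda>n. ennreal (G + (1 - p ^ m) ^ n)) \<longlonglongrightarrow> ennreal G" by simp
  then show ?thesis unfolding G_def[symmetric]
    by (rule LIMSEQ_le_const) (use b in auto)
qed

end


lemma enat_eq_Suc: "(x::enat) = enat (Suc k) \<longleftrightarrow> x \<le> enat (Suc k) \<and> \<not> x \<le> enat k"
  by (cases x) auto

lemma enat_eq_inf: "(x::enat) = \<infinity> \<longleftrightarrow> (\<forall>k. \<not> x \<le> enat k)"
  by (cases x) auto

lemma mb_le: "max_bp A N V \<le> enat k \<longleftrightarrow> (A, N, V) \<in> NRall (Suc k) []"
  unfolding max_bp_def NRall_def in_bp_def
  by (auto simp: SUP_le_iff stack_gs less_Suc_eq_le)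

context fixes lam :: real and Bd :: "nat pmf" and Sd :: "real measure"
  assumes lam: "lam > 0" and Sp: "prob_space Sd" and Sb: "sets Sd = sets borel"
begin

lemma meas_mb: "(\<lambda>(A, N, V). max_bp A N V) \<in> measurable (input_space lam Bd Sd) (count_space UNIV)"
proof -
  let ?f = "\<lambda>(A, N, V). max_bp A N V"
  have le: "\<And>w k. ?f w \<le> enat k \<longleftrightarrow> w \<in> NRall (Suc k) []"
    by (auto simp: mb_le split: prod.splits)
  have sN: "\<And>k. NRall (Suc k) [] \<in> sets (input_space lam Bd Sd)" by (rule sets_NRall[OF Sb])
  have "?f -` {a} \<inter> space (input_space lam Bd Sd) \<in> sets (input_space lam Bd Sd)" for a
  proof (cases a)
    case (enat k)
    show ?thesis
    proof (cases k)
      case 0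
      have e0: "\<And>x::enat. x = enat 0 \<longleftrightarrow> x \<le> enat 0" by (simp add: enat_0)
      have a0: "a = enat 0" using enat 0 by simp
      have "?f -` {a} \<inter> space (input_space lam Bd Sd) = {w. ?f w = enat 0}"
        unfolding a0 by (simp add: space_input[OF Sb] vimage_def)
      also have "\<dots> = {w. ?f w \<le> enat 0}" by (rule Collect_cong) (rule e0)
      also have "\<dots> = NRall (Suc 0) []" using le[of _ 0] by blast
      finally have "?f -` {a} \<inter> space (input_space lam Bd Sd) = NRall (Suc 0) []" .
      then show ?thesis using sN[of 0] by simp
    next
      case (Suc k')
      have a0: "a = enat (Suc k')" using enat Suc by simp
      have "?f -` {a} \<inter> space (input_space lam Bd Sd) = {w. ?f w = enat (Suc k')}"
        unfolding a0 by (simp add: space_input[OF Sb] vimage_def)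
      also have "\<dots> = {w. ?f w \<le> enat (Suc k') \<and> \<not> ?f w \<le> enat k'}" by (rule Collect_cong) (rule enat_eq_Suc)
      also have "\<dots> = NRall (Suc (Suc k')) [] - NRall (Suc k') []" using le by blast
      finally have "?f -` {a} \<inter> space (input_space lam Bd Sd) = NRall (Suc (Suc k')) [] - NRall (Suc k') []" .
      then show ?thesis using sN by auto
    qed
  next
    case infinity
    have "?f -` {a} \<inter> space (input_space lam Bd Sd) = {w. ?f w = \<infinity>}"
      unfolding infinity by (simp add: space_input[OF Sb] vimage_def)
    also have "\<dots> = {w. \<forall>k. \<not> ?f w \<le> enat k}" by (rule Collect_cong) (rule enat_eq_inf)
    also have "\<dots> = space (input_space lam Bd Sd) - (\<Union>k. NRall (Suc k) [])" using le by (auto simp: space_input[OF Sb])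
    finally have "?f -` {a} \<inter> space (input_space lam Bd Sd) = space (input_space lam Bd Sd) - (\<Union>k. NRall (Suc k) [])" .
    then show ?thesis using sN by auto
  qed
  then show ?thesis by (subst measurable_count_space_eq_countable) auto
qed

lemma M_dist_gt:
  "measure (M_dist lam Bd Sd) {x \<in> space (M_dist lam Bd Sd). x > t} =
   (case t of enat k \<Rightarrow> 1 - measure (input_space lam Bd Sd) (NRall (Suc k) []) | \<infinity> \<Rightarrow> 0)"
proof -
  interpret O: prob_space "input_space lam Bd Sd" by (rule prob_input[OF lam Sp])
  have sp: "space (M_dist lam Bd Sd) = UNIV" by (simp add: M_dist_def)
  have "measure (M_dist lam Bd Sd) {x \<in> space (M_dist lam Bd Sd). x > t} =
     measure (input_space lam Bd Sd) ((\<lambda>(A, N, V). max_bp A N V) -` {x. x > t} \<inter> space (input_space lam Bd Sd))"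
    unfolding sp M_dist_def by (subst measure_distr[OF meas_mb]) auto
  also have "\<dots> = (case t of enat k \<Rightarrow> 1 - measure (input_space lam Bd Sd) (NRall (Suc k) []) | \<infinity> \<Rightarrow> 0)"
  proof (cases t)
    case (enat k)
    have "(\<lambda>(A, N, V). max_bp A N V) -` {x. x > t} \<inter> space (input_space lam Bd Sd) = space (input_space lam Bd Sd) - NRall (Suc k) []"
      using enat by (auto simp: space_input[OF Sb] mb_le[symmetric] not_less split: prod.splits)
    then show ?thesis using enat O.prob_compl[OF sets_NRall[OF Sb]] by simp
  next
    case infinity
    then show ?thesis by simp
  qed
  finally show ?thesis .
qed

end


lemma cc_cmp:
  assumes lam: "lam > 0" and Sp: "prob_space Sd" and Sb: "sets Sd = sets borel" and Sn: "AE s in Sd. 0 \<le> s"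
    and Sp': "prob_space Sd'" and Sb': "sets Sd' = sets borel" and Sn': "AE s in Sd'. 0 \<le> s"
    and lt: "lt_ge Sd Sd'" and xy: "0 \<le> y" "y \<le> x"
  shows "cc Sd lam x \<le> cc Sd' lam y"
proof -
  have x0: "0 \<le> x" using xy by simp
  have "cc Sd lam x \<le> cc Sd' lam x"
  proof (cases "x = 0")
    case True
    interpret S: prob_space Sd by (rule Sp)
    interpret S': prob_space Sd' by (rule Sp')
    show ?thesis using True by (simp add: cc_def S.prob_space S'.prob_space)
  next
    case False
    then have th: "lam * x > 0" using x0 lam by simp
    have e: "\<And>s. exp (- (lam * x) * s) = exp (- lam * x * s)" by simp
    have i1: "integrable Sd (\<lambda>s. exp (- (lam * x) * s))" using cc_props(4)[OF Sp Sb Sn lam x0] by (simp only: e)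
    have i2: "integrable Sd' (\<lambda>s. exp (- (lam * x) * s))" using cc_props(4)[OF Sp' Sb' Sn' lam x0] by (simp only: e)
    have "(\<integral>s. exp (- (lam * x) * s) \<partial>Sd) \<le> (\<integral>s. exp (- (lam * x) * s) \<partial>Sd')"
      by (rule lt[unfolded lt_ge_def, rule_format, OF th i1 i2])
    then show ?thesis unfolding cc_def by (simp only: e)
  qed
  also have "cc Sd' lam x \<le> cc Sd' lam y"
    unfolding cc_def
  proof (rule integral_mono_AE)
    show "integrable Sd' (\<lambda>s. exp (- lam * x * s))" by (rule cc_props(4)[OF Sp' Sb' Sn' lam x0])
    show "integrable Sd' (\<lambda>s. exp (- lam * y * s))" by (rule cc_props(4)[OF Sp' Sb' Sn' lam xy(1)])
    show "AE s in Sd'. exp (- lam * x * s) \<le> exp (- lam * y * s)"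
      using Sn' by eventually_elim (use lam xy in \<open>auto intro!: mult_right_mono\<close>)
  qed
  finally show ?thesis .
qed

lemma Qi_mono:
  assumes lam: "lam > 0" and Sp: "prob_space Sd" and Sb: "sets Sd = sets borel" and Sn: "AE s in Sd. 0 \<le> s"
    and Sp': "prob_space Sd'" and Sb': "sets Sd' = sets borel" and Sn': "AE s in Sd'. 0 \<le> s"
    and lt: "lt_ge Sd Sd'"
  shows "Qi lam Bd Sd' m k d \<le> Qi lam Bd Sd m k d"
proof (induction k arbitrary: d)
  case 0 then show ?case by simp
next
  case (Suc k)
  show ?case
  proof (cases "m \<le> d")
    case True then show ?thesis by simp
  next
    case False
    let ?h = "\<lambda>n. (if d + n < m then \<Prod>j<n. cc Sd lam (Qi lam Bd Sd m k (d + j + 1)) else 0)"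
    let ?h' = "\<lambda>n. (if d + n < m then \<Prod>j<n. cc Sd' lam (Qi lam Bd Sd' m k (d + j + 1)) else 0)"
    have Q01: "\<And>j. 0 \<le> Qi lam Bd Sd m k j \<and> Qi lam Bd Sd m k j \<le> 1" by (rule Qi_01[OF lam Sp Sb Sn])
    have Q01': "\<And>j. 0 \<le> Qi lam Bd Sd' m k j \<and> Qi lam Bd Sd' m k j \<le> 1" by (rule Qi_01[OF lam Sp' Sb' Sn'])
    have h01: "\<And>n. 0 \<le> ?h n" "\<And>n. ?h n \<le> 1" using prod_cc_01[OF lam Sp Sb Sn, of "\<lambda>j. Qi lam Bd Sd m k (d + j + 1)"] Q01 by auto
    have h01': "\<And>n. 0 \<le> ?h' n" "\<And>n. ?h' n \<le> 1" using prod_cc_01[OF lam Sp' Sb' Sn', of "\<lambda>j. Qi lam Bd Sd' m k (d + j + 1)"] Q01' by auto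
    have "\<And>n. ?h n \<le> ?h' n"
    proof -
      fix n
      have "(\<Prod>j<n. cc Sd lam (Qi lam Bd Sd m k (d + j + 1))) \<le> (\<Prod>j<n. cc Sd' lam (Qi lam Bd Sd' m k (d + j + 1)))"
      proof (rule prod_mono)
        fix j assume "j \<in> {..<n}"
        show "0 \<le> cc Sd lam (Qi lam Bd Sd m k (d + j + 1)) \<and> cc Sd lam (Qi lam Bd Sd m k (d + j + 1)) \<le> cc Sd' lam (Qi lam Bd Sd' m k (d + j + 1))"
          using cc_props(2)[OF Sp Sb Sn lam] cc_cmp[OF lam Sp Sb Sn Sp' Sb' Sn' lt] Q01 Q01' Suc.IH by blast
      qed
      then show "?h n \<le> ?h' n" by simp
    qed
    then have "(\<integral>n. ?h n \<partial>measure_pmf Bd) \<le> (\<integral>n. ?h' n \<partial>measure_pmf Bd)"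
      by (intro integral_mono pmf_int_01(1)[OF h01] pmf_int_01(1)[OF h01'])
    then show ?thesis using False by simp
  qed
qed

lemma dirac0_emeasure:
  assumes Sp: "prob_space M" and Sb: "sets M = sets borel" and z: "AE x in M. x = (0::real)" and A: "A \<in> sets M"
  shows "emeasure M A = (if 0 \<in> A then 1 else 0)"
proof -
  interpret prob_space M by (rule Sp)
  have sp: "space M = UNIV" using sets_eq_imp_space_eq[OF Sb] by simp
  show ?thesis
  proof (cases "0 \<in> A")
    case True
    have top: "UNIV \<in> sets M" using sets.top[of M] sp by simp
    have "emeasure M A = emeasure M (space M)"
      by (rule emeasure_eq_AE) (use z True A top in \<open>auto simp: sp\<close>)
    then show ?thesis using True by (simp add: emeasure_space_1)
  next
    case False
    have "emeasure M A = emeasure M {}"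
      by (rule emeasure_eq_AE) (use z False A in auto)
    then show ?thesis using False by simp
  qed
qed

lemma dirac0_eq:
  assumes "prob_space M" "sets M = sets borel" "AE x in M. x = (0::real)"
    and "prob_space M'" "sets M' = sets borel" "AE x in M'. x = (0::real)"
  shows "M = M'"
proof (rule measure_eqI)
  show "sets M = sets M'" using assms by simp
  fix A assume "A \<in> sets M"
  then show "emeasure M A = emeasure M' A"
    using dirac0_emeasure[OF assms(1-3)] dirac0_emeasure[OF assms(4-6)] assms by simp
qed

lemma degenerate_AE0:
  fixes Sd :: "real measure"
  assumes Sp: "prob_space Sd" and Sb: "sets Sd = sets borel" and Sn: "AE s in Sd. 0 \<le> s"
    and z: "\<And>e. 0 < e \<Longrightarrow> measure Sd {s. e < s} = 0"
  shows "AE s in Sd. s = 0"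
proof -
  interpret prob_space Sd by (rule Sp)
  have "AE s in Sd. s \<notin> {s. inverse (real (Suc n)) < s}" for n
    by (rule AE_not_in) (use z[of "inverse (real (Suc n))"] Sb in \<open>auto simp: emeasure_eq_measure\<close>)
  then have "AE s in Sd. \<forall>n. \<not> inverse (real (Suc n)) < s" by (simp add: AE_all_countable)
  then show ?thesis using Sn
  proof eventually_elim
    case (elim s)
    show "s = 0"
    proof (rule ccontr)
      assume "s \<noteq> 0"
      then have "0 < s" using elim by simp
      then obtain n where "inverse (real (Suc n)) < s" using reals_Archimedean by blast
      then show False using elim by blast
    qed
  qed
qed

lemma lt_ge_zero:
  assumes Sp: "prob_space Sd" and Sb: "sets Sd = sets borel" and z: "AE s in Sd. s = 0"
    and Sp': "prob_space Sd'" and Sb': "sets Sd' = sets borel" and Sn': "AE s in Sd'. 0 \<le> s"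
    and lt: "lt_ge Sd Sd'"
  shows "AE s in Sd'. s = 0"
proof -
  interpret S: prob_space Sd by (rule Sp)
  interpret S': prob_space Sd' by (rule Sp')
  have Sn: "AE s in Sd. 0 \<le> s" using z by eventually_elim simp
  have int: "integrable Sd (\<lambda>s. exp (- 1 * s))" "integrable Sd' (\<lambda>s. exp (- 1 * s))"
    using cc_props(4)[OF Sp Sb Sn, of 1 1] cc_props(4)[OF Sp' Sb' Sn', of 1 1] by auto
  have "(\<integral>s. exp (- 1 * s) \<partial>Sd) = (\<integral>s. 1 \<partial>Sd)"
    by (rule integral_cong_AE) (use z Sb in auto)
  moreover have "(\<integral>s. exp (- 1 * s) \<partial>Sd) \<le> (\<integral>s. exp (- 1 * s) \<partial>Sd')"
    by (rule lt[unfolded lt_ge_def, rule_format, OF _ int]) simp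
  ultimately have "1 \<le> (\<integral>s. exp (- 1 * s) \<partial>Sd')"
    by (simp add: S.prob_space)
  then have "(\<integral>s. 1 - exp (- 1 * s) \<partial>Sd') \<le> 0"
    using int(2) by (simp add: S'.prob_space)
  moreover have i2: "integrable Sd' (\<lambda>s. 1 - exp (- 1 * s))" using int(2) by simp
  moreover have nn: "AE s in Sd'. 0 \<le> 1 - exp (- 1 * s)" using Sn' by eventually_elim simp
  ultimately have "(\<integral>s. 1 - exp (- 1 * s) \<partial>Sd') = 0"
    using integral_nonneg_AE[OF nn] by linarith
  then have "AE s in Sd'. 1 - exp (- 1 * s) = 0"
    using integral_nonneg_eq_0_iff_AE[OF i2 nn] by simp
  then show ?thesis by eventually_elim simp
qed

lemma cx_imp_lt: "cx_ge Sd' Sd \<Longrightarrow> lt_ge Sd Sd'"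
proof -
  assume cx: "cx_ge Sd' Sd"
  show "lt_ge Sd Sd'" unfolding lt_ge_def
  proof (intro allI impI)
    fix th :: real assume th: "th > 0"
    assume i1: "integrable Sd (\<lambda>x. exp (- th * x))" and i2: "integrable Sd' (\<lambda>y. exp (- th * y))"
    have "convex_on UNIV (\<lambda>x. exp (- th * x))"
    proof (rule convex_on_realI[where f'="\<lambda>x. - th * exp (- th * x)"])
      show "connected (UNIV :: real set)" by simp
      fix x :: real show "((\<lambda>x. exp (- th * x)) has_real_derivative - th * exp (- th * x)) (at x)"
        by (auto intro!: derivative_eq_intros)
    next
      fix x y :: real assume "x \<le> y"
      then have "exp (- th * y) \<le> exp (- th * x)" using th by simp
      then show "- th * exp (- th * x) \<le> - th * exp (- th * y)" using th by simp
    qed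
    with cx i1 i2 show "(\<integral>x. exp (- th * x) \<partial>Sd) \<le> (\<integral>y. exp (- th * y) \<partial>Sd')"
      unfolding cx_ge_def by blast
  qed
qed


lemma Gf_nil: "Gf qv lam [] = 1 - qv 0"
  by (simp add: Gf_def)

lemma NR_cmp:
  assumes lam: "lam > 0" and Bp: "0 \<notin> set_pmf Bd"
    and Sp: "prob_space Sd" and Sb: "sets Sd = sets borel" and Sn: "AE s in Sd. 0 \<le> s"
    and Sp': "prob_space Sd'" and Sb': "sets Sd' = sets borel" and Sn': "AE s in Sd'. 0 \<le> s"
    and lt: "lt_ge Sd Sd'"
  shows "measure (input_space lam Bd Sd) (NRall m []) \<le> measure (input_space lam Bd Sd') (NRall m [])"
proof (cases "\<forall>e>0. measure Sd {s. e < s} = 0")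
  case True
  have z: "AE s in Sd. s = 0" by (rule degenerate_AE0[OF Sp Sb Sn]) (use True in auto)
  have z': "AE s in Sd'. s = 0" by (rule lt_ge_zero[OF Sp Sb z Sp' Sb' Sn' lt])
  have "Sd = Sd'" by (rule dirac0_eq[OF Sp Sb z Sp' Sb' z'])
  then show ?thesis by simp
next
  case False
  then obtain e where e: "0 < e" and ne: "measure Sd {s. e < s} \<noteq> 0" by auto
  have "0 < measure Sd {s. e < s}" using ne measure_nonneg[of Sd "{s. e < s}"] by linarith
  moreover have "0 < 1 - exp (- lam * e)" using lam e by simp
  ultimately have pos: "0 < pgood lam Sd e" unfolding pgood_def[OF lam Sp Sb Sn Bp] by simp
  interpret O: prob_space "input_space lam Bd Sd" by (rule prob_input[OF lam Sp])
  interpret O': prob_space "input_space lam Bd Sd'" by (rule prob_input[OF lam Sp'])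
  have G0: "0 \<le> Gf (qf lam Bd Sd m) lam []" by (rule Gf_nonneg) (use qf_01[OF lam Sp Sb Sn] in auto)
  have "ennreal (measure (input_space lam Bd Sd) (NRall m [])) \<le> ennreal (Gf (qf lam Bd Sd m) lam [])"
    using NR_upper[OF lam Sp Sb Sn Bp, of "[]" e m] e pos by (simp add: O.emeasure_eq_measure)
  then have "measure (input_space lam Bd Sd) (NRall m []) \<le> Gf (qf lam Bd Sd m) lam []"
    using G0 by simp
  also have "\<dots> = 1 - qf lam Bd Sd m 0" by (rule Gf_nil)
  also have "\<dots> \<le> 1 - qf lam Bd Sd' m 0"
    using Qi_mono[OF lam Sp Sb Sn Sp' Sb' Sn' lt, of Bd m m 0] by (simp add: qf_def)
  also have "\<dots> = Gf (qf lam Bd Sd' m) lam []" by (rule Gf_nil[symmetric])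
  also have "\<dots> \<le> measure (input_space lam Bd Sd') (NRall m [])"
  proof -
    have "ennreal (Gf (qf lam Bd Sd' m) lam []) \<le> ennreal (measure (input_space lam Bd Sd') (NRall m []))"
      using NR_lower[OF lam Sp' Sb' Sn' Bp, of "[]" m] by (simp add: O'.emeasure_eq_measure)
    then show ?thesis using measure_nonneg[of "input_space lam Bd Sd'" "NRall m []"] by (auto simp: ennreal_le_iff2)
  qed
  finally show ?thesis .
qed

theorem theorem2:
  fixes lam :: real and Bd :: "nat pmf" and Sd Sd' :: "real measure"
  assumes lam_pos: "lam > 0"
    and batch_pos: "0 \<notin> set_pmf Bd"
    and batch_mean: "integrable (measure_pmf Bd) real"
    and S_prob: "prob_space Sd" and S_borel: "sets Sd = sets borel"
    and S_nonneg: "AE x in Sd. 0 \<le> x" and S_int: "integrable Sd (\<lambda>x. x)"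
    and S_stable: "lam * measure_pmf.expectation Bd real * (\<integral>x. x \<partial>Sd) < 1"
    and S'_prob: "prob_space Sd'" and S'_borel: "sets Sd' = sets borel"
    and S'_nonneg: "AE x in Sd'. 0 \<le> x" and S'_int: "integrable Sd' (\<lambda>x. x)"
    and S'_stable: "lam * measure_pmf.expectation Bd real * (\<integral>x. x \<partial>Sd') < 1"
  shows "(lt_ge Sd Sd' \<longrightarrow> st_ge (M_dist lam Bd Sd) (M_dist lam Bd Sd'))
       \<and> (cx_ge Sd' Sd \<longrightarrow> st_ge (M_dist lam Bd Sd) (M_dist lam Bd Sd'))"
proof -
  have key: "st_ge (M_dist lam Bd Sd) (M_dist lam Bd Sd')" if lt: "lt_ge Sd Sd'"
    unfolding st_ge_def
  proof
    fix t :: enat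
    show "measure (M_dist lam Bd Sd') {x \<in> space (M_dist lam Bd Sd'). t < x}
        \<le> measure (M_dist lam Bd Sd) {x \<in> space (M_dist lam Bd Sd). t < x}"
    proof (cases t)
      case (enat k)
      have "measure (input_space lam Bd Sd) (NRall (Suc k) []) \<le> measure (input_space lam Bd Sd') (NRall (Suc k) [])"
        by (rule NR_cmp[OF lam_pos batch_pos S_prob S_borel S_nonneg S'_prob S'_borel S'_nonneg lt])
      then show ?thesis
        using enat M_dist_gt[OF lam_pos S_prob S_borel, of Bd t] M_dist_gt[OF lam_pos S'_prob S'_borel, of Bd t] by simp
    next
      case infinity
      then show ?thesis
        using M_dist_gt[OF lam_pos S_prob S_borel, of Bd t] M_dist_gt[OF lam_pos S'_prob S'_borel, of Bd t] by simp
    qed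
  qed
  show ?thesis using key cx_imp_lt by blast
qed


end
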